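(* (a) If $(\mathcal{A}_1^s)$ and $(\mathcal{A}_2^s)$ are satisfied for every $s\in\mathbb N_0$, then $\{\Theta_s\}_{s\in\mathbb N_0}$ is a sequence of solid $CB$-spaces with the properties (i)–(iii) below (with $Y_s=\Theta_s$, $|\cdot|_s=\|\cdot\|_s$) such that $\{g_i|_{X_F}\}_{i=1}^\infty$ is an $F$-Bessel sequence for $X_F$ with respect to $\Theta_F:=\bigcap_{s\in\mathbb N_0}\Theta_s$. (b) If $(\mathcal{A}_1^s)$, $(\mathcal{A}_2^s)$ and $(\mathcal{A}_3^s)$ are satisfied for every $s\in\mathbb N_0$, then $\{g_i|_{X_F}\}_{i=1}^\infty$ is a pre-$F$-frame for $X_F$ with respect to $\Theta_F$.
   Context: A sequence $\{Y_s,|\cdot|_s\}_{s\in\mathbb N_0}$ of separable Banach spaces is said to have properties (i)–(iii) if: (i) $\{\mathbf 0\}\neq Y_F:=\bigcap_{s\in\mathbb N_0}Y_s\subseteq\cdots\subseteq Y_2\subseteq Y_1\subseteq Y_0$; (ii) $|\cdot|_0\le|\cdot|_1\le|\cdot|_2\le\cdots$; (iii) $Y_F$ is dense in $Y_s$ for every $s\in\mathbb N_0$. Then $Y_F$ is a Fréchet space with the norms $|\cdot|_s$. Let $\{X_s,\|\cdot\|_s\}_{s\in\mathbb N_0}$ be a sequence of reflexive Banach spaces with properties (i)–(iii), $X_F=\bigcap_s X_s$, and let $\{g_i\}_{i=1}^\infty\in(X_0^* )^{\mathbb N}$ with each $g_i$ a nonzero functional. For every $s\in\mathbb N_0$ and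 every scalar sequence $c=\{c_i\}_{i=1}^\infty$ put $M^c_s:=\{f\in X_s: |c_i|\le|g_i(f)|,\ i\in\mathbb N\}$, and define $\Theta_s:=\{c=\{c_i\}: M^c_s\neq\varnothing\}$ with $\|c\|_s:=\inf\{\|f\|_s: f\in M^c_s\}$. For a sequence $c$ and $k\in\mathbb N$, $c^{(k)}:=\{0,\dots,0,c_{k+1},c_{k+2},\dots\}$ ($k$ zeros). Conditions: $(\mathcal{A}_1^s)$: for all $c,d\in\Theta_s$, all $f\in M^c_s$, $h\in M^d_s$, there exists $r\in M^{c+d}_s$ with $\|r\|_s\le\|f\|_s+\|h\|_s$. $(\mathcal{A}_2^s)$: for all $c\in\Theta_s$ and $\varepsilon>0$ there exist $k\in\mathbb N$ and $f\in M^{c^{(k)}}_s$ with $\|f\|_s<\varepsilon$. $(\mathcal{A}_3^s)$: there exists $A_s\in(0,1]$ such that for every $f\in X_s$, $\widetilde f\in M_s^{\{g_i(f)\}_{i=1}^\infty}$ implies $A_s\|f\|_s\le\|\widetilde f\|_s$. Definitions: a sequence space $\Theta$ is solid if $\{c_i\}\in\Theta$ and $|d_i|\le|c_i|$ for all $i$ imply $\{d_i\}\in\Theta$ and $\|\{d_i\}\|\le\|\{c_i\}\|$; a $BK$-space is a Banach sequence space with continuous coordinate functionals; a $CB$-space is a $BK$-space in which the canonical vectors form a Schauder basis. Given $\{\Theta_s\}$ a sequence of $BK$-spaces with (i)–(iii), $\{g_i\}\in(X_F^* )^{\mathbb N}$ is an $F$-Bessel sequence for $X_F$ with respect to $\Theta_F$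 if $\{g_i(f)\}\in\Theta_F$ for all $f\in X_F$ and for each $s$ there is $B_s<\infty$ with $\|\{g_i(f)\}\|_s\le B_s\|f\|_s$, $f\in X_F$; it is a pre-$F$-frame if moreover for each $s$ there is $A_s>0$ with $A_s\|f\|_s\le\|\{g_i(f)\}\|_s$, $f\in X_F$. *)

theory Defs
  imports "HOL-Analysis.Analysis" "HOL-Library.Function_Algebras"
begin

text \<open>Abstract setting: all spaces live in one ambient vector space of type 'a over the
scalar field 'k (real or complex), with scalar multiplication scl.  A "space" is a carrier
set together with a real-valued function playing the role of its norm.\<close>

definition subspace_on :: "('k::field \<Rightarrow> 'a::ab_group_add \<Rightarrow> 'a) \<Rightarrow> 'a set \<Rightarrow> bool" where
  "subspace_on scl X \<longleftrightarrow> 0 \<in> X \<and> (\<forall>x\<in>X. \<forall>y\<in>X. x + y \<in> X) \<and> (\<forall>a. \<forall>x\<in>X. scl a x \<in> X)"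

definition norm_on :: "('k::real_normed_field \<Rightarrow> 'a::ab_group_add \<Rightarrow> 'a) \<Rightarrow> 'a set \<Rightarrow> ('a \<Rightarrow> real) \<Rightarrow> bool" where
  "norm_on scl X N \<longleftrightarrow>
     (\<forall>x\<in>X. 0 \<le> N x \<and> (N x = 0 \<longleftrightarrow> x = 0)) \<and>
     (\<forall>x\<in>X. \<forall>y\<in>X. N (x + y) \<le> N x + N y) \<and>
     (\<forall>a. \<forall>x\<in>X. N (scl a x) = norm a * N x)"

definition complete_on :: "'a::ab_group_add set \<Rightarrow> ('a \<Rightarrow> real) \<Rightarrow> bool" where
  "complete_on X N \<longleftrightarrow>
     (\<forall>u::nat \<Rightarrow> 'a. (\<forall>n. u n \<in> X) \<and> (\<forall>e>0. \<exists>M. \<forall>m\<ge>M. \<forall>n\<ge>M. N (u m - u n) < e)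
        \<longrightarrow> (\<exists>x\<in>X. (\<lambda>n. N (u n - x)) \<longlonglongrightarrow> 0))"

definition banach_on :: "('k::real_normed_field \<Rightarrow> 'a::ab_group_add \<Rightarrow> 'a) \<Rightarrow> 'a set \<Rightarrow> ('a \<Rightarrow> real) \<Rightarrow> bool" where
  "banach_on scl X N \<longleftrightarrow> subspace_on scl X \<and> norm_on scl X N \<and> complete_on X N"

definition dense_on :: "'a::ab_group_add set \<Rightarrow> 'a set \<Rightarrow> ('a \<Rightarrow> real) \<Rightarrow> bool" where
  "dense_on Y X N \<longleftrightarrow> Y \<subseteq> X \<and> (\<forall>x\<in>X. \<forall>e>0. \<exists>y\<in>Y. N (x - y) < e)"

definition separable_on :: "'a::ab_group_add set \<Rightarrow> ('a \<Rightarrow> real) \<Rightarrow> bool" where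
  "separable_on X N \<longleftrightarrow> (\<exists>D. countable D \<and> dense_on D X N)"

definition props_iii :: "('k::real_normed_field \<Rightarrow> 'a::ab_group_add \<Rightarrow> 'a) \<Rightarrow> (nat \<Rightarrow> 'a set) \<Rightarrow> (nat \<Rightarrow> 'a \<Rightarrow> real) \<Rightarrow> bool" where
  "props_iii scl Y N \<longleftrightarrow>
     (\<forall>s. banach_on scl (Y s) (N s) \<and> separable_on (Y s) (N s)) \<and>
     (\<Inter>s. Y s) \<noteq> {0} \<and> (\<forall>s. Y (Suc s) \<subseteq> Y s) \<and>
     (\<forall>s. \<forall>y\<in>Y (Suc s). N s y \<le> N (Suc s) y) \<and>
     (\<forall>s. dense_on (\<Inter>s. Y s) (Y s) (N s))"

definition lin_fun :: "('k::field \<Rightarrow> 'a::ab_group_add \<Rightarrow> 'a) \<Rightarrow> 'a set \<Rightarrow> ('a \<Rightarrow> 'k) \<Rightarrow> bool" where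
  "lin_fun scl X \<phi> \<longleftrightarrow> (\<forall>x\<in>X. \<forall>y\<in>X. \<phi> (x + y) = \<phi> x + \<phi> y) \<and> (\<forall>a. \<forall>x\<in>X. \<phi> (scl a x) = a * \<phi> x)"

definition bounded_fun :: "'a set \<Rightarrow> ('a \<Rightarrow> real) \<Rightarrow> ('a \<Rightarrow> 'k::real_normed_field) \<Rightarrow> bool" where
  "bounded_fun X N \<phi> \<longleftrightarrow> (\<exists>C. \<forall>x\<in>X. norm (\<phi> x) \<le> C * N x)"

text \<open>Dual space; functionals are normalised to vanish outside the carrier.\<close>
definition dual_set :: "('k::real_normed_field \<Rightarrow> 'a::ab_group_add \<Rightarrow> 'a) \<Rightarrow> 'a set \<Rightarrow> ('a \<Rightarrow> real) \<Rightarrow> ('a \<Rightarrow> 'k) set" where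
  "dual_set scl X N = {\<phi>. lin_fun scl X \<phi> \<and> bounded_fun X N \<phi> \<and> (\<forall>x. x \<notin> X \<longrightarrow> \<phi> x = 0)}"

definition dual_norm :: "'a set \<Rightarrow> ('a \<Rightarrow> real) \<Rightarrow> ('a \<Rightarrow> 'k::real_normed_field) \<Rightarrow> real" where
  "dual_norm X N \<phi> = Sup {norm (\<phi> x) | x. x \<in> X \<and> N x \<le> 1}"

definition reflexive_on :: "('k::real_normed_field \<Rightarrow> 'a::ab_group_add \<Rightarrow> 'a) \<Rightarrow> 'a set \<Rightarrow> ('a \<Rightarrow> real) \<Rightarrow> bool" where
  "reflexive_on scl X N \<longleftrightarrow>
     (\<forall>\<Phi> :: ('a \<Rightarrow> 'k) \<Rightarrow> 'k.
        (\<forall>\<phi>\<in>dual_set scl X N. \<forall>\<psi>\<in>dual_set scl X N. \<Phi> (\<lambda>x. \<phi> x + \<psi> x) = \<Phi> \<phi> + \<Phi> \<psi>) \<and>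
        (\<forall>a. \<forall>\<phi>\<in>dual_set scl X N. \<Phi> (\<lambda>x. a * \<phi> x) = a * \<Phi> \<phi>) \<and>
        (\<exists>C. \<forall>\<phi>\<in>dual_set scl X N. norm (\<Phi> \<phi>) \<le> C * dual_norm X N \<phi>)
      \<longrightarrow> (\<exists>x\<in>X. \<forall>\<phi>\<in>dual_set scl X N. \<Phi> \<phi> = \<phi> x))"

text \<open>Sequence spaces: scalar sequences nat => 'k (index 0 corresponds to index 1 of the paper).\<close>
definition seq_scl :: "'k::real_normed_field \<Rightarrow> (nat \<Rightarrow> 'k) \<Rightarrow> (nat \<Rightarrow> 'k)" where
  "seq_scl a c = (\<lambda>i. a * c i)"

definition Mset :: "(nat \<Rightarrow> 'a set) \<Rightarrow> (nat \<Rightarrow> 'a \<Rightarrow> 'k::real_normed_field) \<Rightarrow> nat \<Rightarrow> (nat \<Rightarrow> 'k) \<Rightarrow> 'a set" where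
  "Mset X g s c = {f \<in> X s. \<forall>i. norm (c i) \<le> norm (g i f)}"

definition Theta :: "(nat \<Rightarrow> 'a set) \<Rightarrow> (nat \<Rightarrow> 'a \<Rightarrow> 'k::real_normed_field) \<Rightarrow> nat \<Rightarrow> (nat \<Rightarrow> 'k) set" where
  "Theta X g s = {c. Mset X g s c \<noteq> {}}"

definition Theta_norm :: "(nat \<Rightarrow> 'a set) \<Rightarrow> (nat \<Rightarrow> 'a \<Rightarrow> real) \<Rightarrow> (nat \<Rightarrow> 'a \<Rightarrow> 'k::real_normed_field) \<Rightarrow> nat \<Rightarrow> (nat \<Rightarrow> 'k) \<Rightarrow> real" where
  "Theta_norm X N g s c = Inf (N s ` Mset X g s c)"

definition tail_seq :: "nat \<Rightarrow> (nat \<Rightarrow> 'k::zero) \<Rightarrow> nat \<Rightarrow> 'k" where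
  "tail_seq k c = (\<lambda>i. if i < k then 0 else c i)"

definition condA1 :: "(nat \<Rightarrow> 'a set) \<Rightarrow> (nat \<Rightarrow> 'a \<Rightarrow> real) \<Rightarrow> (nat \<Rightarrow> 'a \<Rightarrow> 'k::real_normed_field) \<Rightarrow> nat \<Rightarrow> bool" where
  "condA1 X N g s \<longleftrightarrow>
     (\<forall>c\<in>Theta X g s. \<forall>d\<in>Theta X g s. \<forall>f\<in>Mset X g s c. \<forall>h\<in>Mset X g s d.
        \<exists>r\<in>Mset X g s (\<lambda>i. c i + d i). N s r \<le> N s f + N s h)"

definition condA2 :: "(nat \<Rightarrow> 'a set) \<Rightarrow> (nat \<Rightarrow> 'a \<Rightarrow> real) \<Rightarrow> (nat \<Rightarrow> 'a \<Rightarrow> 'k::real_normed_field) \<Rightarrow> nat \<Rightarrow> bool" where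
  "condA2 X N g s \<longleftrightarrow>
     (\<forall>c\<in>Theta X g s. \<forall>e>0. \<exists>k\<ge>1. \<exists>f\<in>Mset X g s (tail_seq k c). N s f < e)"

definition condA3 :: "(nat \<Rightarrow> 'a set) \<Rightarrow> (nat \<Rightarrow> 'a \<Rightarrow> real) \<Rightarrow> (nat \<Rightarrow> 'a \<Rightarrow> 'k::real_normed_field) \<Rightarrow> nat \<Rightarrow> bool" where
  "condA3 X N g s \<longleftrightarrow>
     (\<exists>A. 0 < A \<and> A \<le> 1 \<and>
        (\<forall>f\<in>X s. \<forall>ft\<in>Mset X g s (\<lambda>i. g i f). A * N s f \<le> N s ft))"

definition solid :: "(nat \<Rightarrow> 'k::real_normed_field) set \<Rightarrow> ((nat \<Rightarrow> 'k) \<Rightarrow> real) \<Rightarrow> bool" where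
  "solid T nrm \<longleftrightarrow> (\<forall>c\<in>T. \<forall>d. (\<forall>i. norm (d i) \<le> norm (c i)) \<longrightarrow> d \<in> T \<and> nrm d \<le> nrm c)"

definition BK_space :: "(nat \<Rightarrow> 'k::real_normed_field) set \<Rightarrow> ((nat \<Rightarrow> 'k) \<Rightarrow> real) \<Rightarrow> bool" where
  "BK_space T nrm \<longleftrightarrow> banach_on seq_scl T nrm \<and> (\<forall>i. \<exists>C. \<forall>c\<in>T. norm (c i) \<le> C * nrm c)"

definition unit_seq :: "nat \<Rightarrow> nat \<Rightarrow> 'k::zero_neq_one" where
  "unit_seq j = (\<lambda>i. if i = j then 1 else 0)"

definition CB_space :: "(nat \<Rightarrow> 'k::real_normed_field) set \<Rightarrow> ((nat \<Rightarrow> 'k) \<Rightarrow> real) \<Rightarrow> bool" where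
  "CB_space T nrm \<longleftrightarrow> BK_space T nrm \<and> (\<forall>j. unit_seq j \<in> T) \<and>
     (\<forall>c\<in>T. \<exists>!a::nat \<Rightarrow> 'k. (\<lambda>n. nrm (c - (\<Sum>j<n. seq_scl (a j) (unit_seq j)))) \<longlonglongrightarrow> 0)"

definition F_Bessel :: "('k::real_normed_field \<Rightarrow> 'a::ab_group_add \<Rightarrow> 'a) \<Rightarrow> (nat \<Rightarrow> 'a set) \<Rightarrow> (nat \<Rightarrow> 'a \<Rightarrow> real)
    \<Rightarrow> (nat \<Rightarrow> 'a \<Rightarrow> 'k) \<Rightarrow> (nat \<Rightarrow> (nat \<Rightarrow> 'k) set) \<Rightarrow> (nat \<Rightarrow> (nat \<Rightarrow> 'k) \<Rightarrow> real) \<Rightarrow> bool" where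
  "F_Bessel scl X N g T nrm \<longleftrightarrow>
     (\<forall>i. lin_fun scl (\<Inter>s. X s) (g i) \<and> (\<exists>s C. \<forall>f\<in>(\<Inter>s. X s). norm (g i f) \<le> C * N s f)) \<and>
     (\<forall>f\<in>(\<Inter>s. X s). (\<lambda>i. g i f) \<in> (\<Inter>s. T s)) \<and>
     (\<forall>s. \<exists>B. \<forall>f\<in>(\<Inter>s. X s). nrm s (\<lambda>i. g i f) \<le> B * N s f)"

definition pre_F_frame :: "('k::real_normed_field \<Rightarrow> 'a::ab_group_add \<Rightarrow> 'a) \<Rightarrow> (nat \<Rightarrow> 'a set) \<Rightarrow> (nat \<Rightarrow> 'a \<Rightarrow> real)
    \<Rightarrow> (nat \<Rightarrow> 'a \<Rightarrow> 'k) \<Rightarrow> (nat \<Rightarrow> (nat \<Rightarrow> 'k) set) \<Rightarrow> (nat \<Rightarrow> (nat \<Rightarrow> 'k) \<Rightarrow> real) \<Rightarrow> bool" where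
  "pre_F_frame scl X N g T nrm \<longleftrightarrow> F_Bessel scl X N g T nrm \<and>
     (\<forall>s. \<exists>A>0. \<forall>f\<in>(\<Inter>s. X s). A * N s f \<le> nrm s (\<lambda>i. g i f))"

end

theory Submission
  imports Defs "HOL-Computational_Algebra.Fundamental_Theorem_Algebra"
begin

lemma mop_add: "map_poly (of_real::real\<Rightarrow>'b::real_algebra_1) (p + q) = map_poly of_real p + map_poly of_real q"
  by (intro poly_eqI) (simp add: coeff_map_poly)

lemma mop_diff: "map_poly (of_real::real\<Rightarrow>'b::real_algebra_1) (p - q) = map_poly of_real p - map_poly of_real q"
  by (intro poly_eqI) (simp add: coeff_map_poly)

lemma mop_mult: "map_poly (of_real::real\<Rightarrow>'b::{real_algebra_1,comm_ring_1}) (p * q) = map_poly of_real p * map_poly of_real q"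
  by (intro poly_eqI) (simp add: coeff_map_poly coeff_mult of_real_sum)

lemma mop_const: "map_poly (of_real::real\<Rightarrow>'b::real_algebra_1) [:c:] = [:of_real c:]"
  by (simp add: map_poly_pCons)

lemma mop_power: "map_poly (of_real::real\<Rightarrow>'b::{real_algebra_1,comm_ring_1}) (p ^ n) = (map_poly of_real p) ^ n"
  by (induction n) (simp_all add: mop_mult)

lemma poly_mop_real: "poly (map_poly (of_real::real\<Rightarrow>'b::{real_algebra_1,comm_ring_1}) p) (of_real x) = of_real (poly p x)"
  by (induction p) (simp_all add: map_poly_pCons)

lemma poly_mop_cnj: "poly (map_poly complex_of_real p) (cnj z) = cnj (poly (map_poly complex_of_real p) z)"
  by (induction p) (simp_all add: map_poly_pCons)

lemma poly_quad: "poly (map_poly (of_real::real\<Rightarrow>'b::{real_algebra_1,comm_ring_1}) [:a, b, 1:]) z = of_real a + of_real b * z + z^2"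
  by (simp add: map_poly_pCons algebra_simps power2_eq_square)


lemma evK_lower:
  fixes \<xi> :: "'k::real_normed_field"
  assumes mn: "\<And>s T. T \<ge> 0 \<Longrightarrow> m \<le> norm ((\<xi> - of_real s)^2 + of_real T)" and m0: "m \<ge> 0"
  shows "lead_coeff R = 1 \<Longrightarrow> (\<forall>x. poly R x \<noteq> 0) \<Longrightarrow>
         m ^ (degree R div 2) \<le> norm (poly (map_poly of_real R) \<xi>)"
proof (induction "degree R" arbitrary: R rule: less_induct)
  case less
  show ?case
  proof (cases "degree R = 0")
    case True
    then have "R = [:1:]" using less.prems(1)
      by (metis degree_eq_zeroE lead_coeff_pCons(2) pCons_0_0)
    then show ?thesis by (simp add: map_poly_pCons)
  next
    case False
    define RC where "RC = map_poly complex_of_real R"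
    have degRC: "degree RC = degree R" unfolding RC_def by (simp add: degree_map_poly)
    have "\<not> (\<exists>a l. a \<noteq> 0 \<and> l = 0 \<and> RC = pCons a l)"
      using False degRC by auto
    then obtain \<alpha> where \<alpha>: "poly RC \<alpha> = 0" using fundamental_theorem_of_algebra_alt by blast
    have im: "Im \<alpha> \<noteq> 0"
    proof
      assume "Im \<alpha> = 0"
      then have "\<alpha> = of_real (Re \<alpha>)" by (simp add: complex_eq_iff)
      then have "of_real (poly R (Re \<alpha>)) = (0::complex)" using \<alpha> unfolding RC_def
        by (metis poly_mop_real)
      then show False using less.prems(2) by simp
    qed
    have \<alpha>c: "poly RC (cnj \<alpha>) = 0" using \<alpha> unfolding RC_def by (simp add: poly_mop_cnj)
    define D :: "real poly" where "D = [:Re \<alpha>^2 + Im \<alpha>^2, -2 * Re \<alpha>, 1:]"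
    define S where "S = R div D"
    define M where "M = R mod D"
    have D0: "D \<noteq> 0" and degD: "degree D = 2" and lcD: "lead_coeff D = 1" unfolding D_def by auto
    have RDSM: "R = D * S + M" unfolding S_def M_def by simp
    have degM: "degree M < 2 \<or> M = 0" unfolding M_def using degree_mod_less[OF D0] degD by auto
    have DC_a: "poly (map_poly complex_of_real D) z = 0" if "z = \<alpha> \<or> z = cnj \<alpha>" for z
      unfolding D_def poly_quad using that
      by (auto simp: complex_eq_iff power2_eq_square algebra_simps)
    have MC: "poly (map_poly complex_of_real M) z = 0" if "z = \<alpha> \<or> z = cnj \<alpha>" for z
    proof -
      have "poly RC z = 0" using that \<alpha> \<alpha>c by auto
      then show ?thesis unfolding RC_def using DC_a[OF that]
        by (subst (asm) RDSM) (simp add: mop_add mop_mult)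
    qed
    have M_0: "M = 0"
    proof -
      have M_eq: "M = [:coeff M 0, coeff M 1:]"
        using degM by (auto intro!: poly_eqI simp: coeff_pCons coeff_eq_0 split: nat.splits)
      have e: "poly (map_poly complex_of_real M) z = of_real (coeff M 0) + of_real (coeff M 1) * z" for z
        by (subst M_eq) (simp add: map_poly_pCons)
      have "Im (poly (map_poly complex_of_real M) \<alpha>) = 0" using MC by simp
      then have "coeff M 1 * Im \<alpha> = 0" by (simp add: e)
      then have c1: "coeff M 1 = 0" using im by simp
      have "Re (poly (map_poly complex_of_real M) \<alpha>) = 0" using MC by simp
      then have "coeff M 0 = 0" using c1 by (simp add: e)
      with c1 M_eq show ?thesis by simp
    qed
    have RDS: "R = D * S" using RDSM M_0 by simp
    have S0: "S \<noteq> 0" using RDS less.prems(1) by auto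
    have lcS: "lead_coeff S = 1" using less.prems(1) RDS lcD by (simp add: lead_coeff_mult)
    have degS: "degree R = degree S + 2" using RDS degD D0 S0 by (simp add: degree_mult_eq)
    have rootS: "\<forall>x. poly S x \<noteq> 0" using less.prems(2) RDS by auto
    have IH: "m ^ (degree S div 2) \<le> norm (poly (map_poly of_real S) \<xi>)"
      using less.hyps[of S] degS lcS rootS by simp
    have evD: "poly (map_poly of_real D) \<xi> = (\<xi> - of_real (Re \<alpha>))^2 + of_real (Im \<alpha>^2)"
      unfolding D_def poly_quad by (simp add: power2_eq_square algebra_simps)
    have nD: "m \<le> norm (poly (map_poly of_real D) \<xi>)" unfolding evD by (rule mn) simp
    have "m ^ (degree R div 2) = m * m ^ (degree S div 2)" using degS by simp
    also have "\<dots> \<le> norm (poly (map_poly of_real D) \<xi>) * norm (poly (map_poly of_real S) \<xi>)"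
      by (intro mult_mono nD IH) (auto simp: m0)
    also have "\<dots> = norm (poly (map_poly of_real R) \<xi>)"
      using RDS by (simp add: mop_mult norm_mult)
    finally show ?thesis .
  qed
qed


lemma const_poly_power: "[:c:] ^ n = [:c ^ n:]"
  by (induction n) (auto simp: one_pCons mult.commute)

lemma mazur_step:
  fixes \<xi> :: "'k::real_normed_field"
  assumes mn: "\<And>s T. T \<ge> 0 \<Longrightarrow> m \<le> norm ((\<xi> - of_real s)^2 + of_real T)"
    and eq: "norm ((\<xi> - of_real s0)^2 + of_real T0) = m" and T0: "T0 \<ge> 0" and m: "m > 0"
    and d: "0 < \<delta>" "\<delta> < m"
  shows "norm ((\<xi> - of_real s0)^2 + of_real (T0 + \<delta>)) \<le> m"
proof -
  define P :: "real poly" where "P = [:s0^2 + T0, -2 * s0, 1:]"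
  have evP: "poly (map_poly of_real P) \<xi> = (\<xi> - of_real s0)^2 + of_real T0"
    unfolding P_def poly_quad by (simp add: power2_eq_square algebra_simps)
  define Q where "Q = P - [:-\<delta>:]"
  have Qf: "Q = [:s0^2 + (T0 + \<delta>), -2 * s0, 1:]" unfolding Q_def P_def by simp
  have evQ: "poly (map_poly of_real Q) \<xi> = (\<xi> - of_real s0)^2 + of_real (T0 + \<delta>)"
    unfolding Qf poly_quad by (simp add: power2_eq_square algebra_simps)
  have P0: "P \<noteq> 0" and degP: "degree P = 2" and lcP: "lead_coeff P = 1" unfolding P_def by auto
  have Q0: "Q \<noteq> 0" and degQ: "degree Q = 2" and lcQ: "lead_coeff Q = 1" unfolding Qf by auto
  have polyP: "poly P x = (x - s0)^2 + T0" for x unfolding P_def by (simp add: power2_eq_square algebra_simps)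
  have bound: "norm (poly (map_poly of_real Q) \<xi>) * m^(2*k) \<le> m^(2*k+1) + \<delta>^(2*k+1)" for k
  proof -
    define n where "n = 2*k+1"
    define Rest where "Rest = (\<Sum>i<n. [:-\<delta>:]^(n - Suc i) * P^i)"
    have id: "P^n - [:-\<delta>:]^n = Q * Rest"
      unfolding Rest_def Q_def by (rule power_diff_sumr2)
    have degPn: "degree (P^n) = 2*n" using degP P0 by (simp add: degree_power_eq)
    have lcPn: "lead_coeff (P^n) = 1" using lcP by (simp add: lead_coeff_power)
    have "degree (- ([:-\<delta>:]^n)) < degree (P^n)" unfolding const_poly_power using degPn n_def by simp
    then have lcL: "lead_coeff (P^n - [:-\<delta>:]^n) = 1" and degL: "degree (P^n - [:-\<delta>:]^n) = 2*n"
      using lcPn degPn lead_coeff_add_le[of "- ([:-\<delta>:]^n)" "P^n"] degree_add_eq_left[of "- ([:-\<delta>:]^n)" "P^n"]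
      by (simp_all add: add.commute)
    have R0: "Rest \<noteq> 0" using id lcL by auto
    have lcR: "lead_coeff Rest = 1" using id lcL lcQ by (simp add: lead_coeff_mult)
    have degR: "degree Rest = 4*k" using id degL degQ Q0 R0 n_def by (simp add: degree_mult_eq)
    have roots: "\<forall>x. poly Rest x \<noteq> 0"
    proof
      fix x
      have pid: "poly P x ^ n - (-\<delta>)^n = poly Q x * poly Rest x"
        using arg_cong[OF id, of "\<lambda>p. poly p x"] by (simp add: const_poly_power)
      have "poly P x \<ge> 0" unfolding polyP using T0 by simp
      then have "poly P x ^ n \<ge> 0" by simp
      moreover have "(-\<delta>)^n < 0" unfolding n_def using d by (simp add: power_odd_eq)
      ultimately have "poly P x ^ n - (-\<delta>)^n > 0" by linarith
      then show "poly Rest x \<noteq> 0" using pid by auto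
    qed
    have lowR: "m^(2*k) \<le> norm (poly (map_poly of_real Rest) \<xi>)"
      using evK_lower[OF mn _ lcR roots] m degR by simp
    have evid: "poly (map_poly of_real P) \<xi> ^ n - (of_real (-\<delta>))^n = poly (map_poly of_real Q) \<xi> * poly (map_poly of_real Rest) \<xi>"
      using arg_cong[OF id, of "\<lambda>p. poly (map_poly (of_real::real\<Rightarrow>'k) p) \<xi>"]
      by (simp add: mop_diff mop_mult mop_power const_poly_power mop_const)
    have "norm (poly (map_poly of_real Q) \<xi>) * m^(2*k) \<le> norm (poly (map_poly of_real Q) \<xi>) * norm (poly (map_poly of_real Rest) \<xi>)"
      by (intro mult_left_mono lowR) simp
    also have "\<dots> = norm (poly (map_poly of_real P) \<xi> ^ n - (of_real (-\<delta>))^n)" by (simp only: evid norm_mult)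
    also have "\<dots> \<le> norm (poly (map_poly of_real P) \<xi>) ^ n + \<delta>^n"
      using norm_triangle_ineq4[of "poly (map_poly of_real P) \<xi> ^ n" "(of_real (-\<delta>))^n"] d
      by (simp add: norm_power)
    also have "\<dots> = m^(2*k+1) + \<delta>^(2*k+1)" using eq evP n_def by simp
    finally show ?thesis .
  qed
  show ?thesis
  proof (rule ccontr)
    let ?q = "norm ((\<xi> - of_real s0)^2 + of_real (T0 + \<delta>))"
    assume "\<not> ?q \<le> m"
    then have e: "?q - m > 0" by simp
    have "(\<lambda>k. ((\<delta>/m)^2)^k) \<longlonglongrightarrow> 0"
      using d m by (intro LIMSEQ_power_zero) (simp add: power_less_one_iff divide_less_eq)
    then have "eventually (\<lambda>k. ((\<delta>/m)^2)^k < (?q - m) / \<delta>) sequentially"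
      using e d by (intro order_tendstoD(2)) auto
    then obtain k where k: "((\<delta>/m)^2)^k < (?q - m) / \<delta>" by (auto simp: eventually_sequentially)
    have bk: "?q * m^(2*k) \<le> m^(2*k+1) + \<delta>^(2*k+1)" using bound[of k] evQ by simp
    have "?q \<le> m + \<delta> * ((\<delta>/m)^2)^k"
    proof -
      have mp: "m^(2*k) > 0" using m by simp
      have "?q \<le> (m^(2*k+1) + \<delta>^(2*k+1)) / m^(2*k)" using bk mp by (simp add: pos_le_divide_eq)
      also have "\<dots> = m + \<delta> * (\<delta>^(2*k) / m^(2*k))" using m
        by (simp add: field_simps)
      also have "\<delta>^(2*k) / m^(2*k) = ((\<delta>/m)^2)^k"
        by (simp add: power_mult[symmetric] power_divide mult.commute)
      finally show ?thesis .
    qed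
    moreover have "\<delta> * ((\<delta>/m)^2)^k < ?q - m" using k d by (simp add: field_simps)
    ultimately show False by simp
  qed
qed


lemma quad_root:
  fixes \<xi> :: "'k::real_normed_field"
  shows "\<exists>s T. T \<ge> 0 \<and> (\<xi> - of_real s)^2 + of_real T = 0"
proof -
  define g where "g = (\<lambda>(p::real\<times>real). norm ((\<xi> - of_real (fst p))^2 + of_real (snd p)))"
  define a where "a = norm \<xi>"
  have a0: "a \<ge> 0" unfolding a_def by simp
  have coer: "s^2 + T - 2*\<bar>s\<bar>*a - a^2 \<le> g (s,T)" if "T \<ge> 0" for s T
  proof -
    have e: "(\<xi> - of_real s)^2 + of_real T = of_real (s^2+T) - (of_real (2 * s) * \<xi> - \<xi>^2)"
      by (simp add: power2_eq_square algebra_simps)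
    have "norm (of_real (2 * s) * \<xi> - \<xi>^2) \<le> 2*\<bar>s\<bar>*a + a^2"
      using norm_triangle_ineq4[of "of_real (2 * s) * \<xi>" "\<xi>^2"]
      by (simp add: a_def norm_mult norm_power)
    moreover have "norm (of_real (s^2+T) :: 'k) = s^2 + T" using that by (subst norm_of_real) simp
    moreover have "g (s,T) = norm (of_real (s^2+T) - (of_real (2 * s) * \<xi> - \<xi>^2))"
      unfolding g_def by (simp add: power2_eq_square algebra_simps)
    ultimately show ?thesis using norm_triangle_ineq2[of "of_real (s^2+T)::'k" "of_real (2 * s) * \<xi> - \<xi>^2"]
      by linarith
  qed
  define R where "R = 3*a^2 + 3*a + 3"
  define B where "B = {-R..R} \<times> {0..R}"
  have cB: "compact B" unfolding B_def by (intro compact_Times compact_Icc)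
  have R0: "R \<ge> 0" unfolding R_def using a0 by simp
  have B0: "(0,0) \<in> B" unfolding B_def using R0 by auto
  have cont: "continuous_on B g" unfolding g_def by (intro continuous_intros)
  obtain p0 where p0: "p0 \<in> B" "\<forall>q\<in>B. g p0 \<le> g q"
    using continuous_attains_inf[OF cB _ cont] B0 by blast
  have g00: "g (0,0) = a^2" unfolding g_def a_def by (simp add: norm_power)
  have glob: "g p0 \<le> g (s,T)" if T: "T \<ge> 0" for s T
  proof (cases "(s,T) \<in> B")
    case True then show ?thesis using p0 by auto
  next
    case False
    then have out: "\<bar>s\<bar> > R \<or> T > R" unfolding B_def using T by auto
    have "g (s,T) > a^2"
    proof (cases "\<bar>s\<bar> > R")
      case True
      have "\<bar>s\<bar> - 2*a \<ge> 1" using True a0 unfolding R_def by (smt (verit) zero_le_power2)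
      then have "\<bar>s\<bar> * (\<bar>s\<bar> - 2*a) \<ge> \<bar>s\<bar>" using mult_left_mono[of 1 "\<bar>s\<bar> - 2*a" "\<bar>s\<bar>"] by simp
      moreover have "s^2 = \<bar>s\<bar> * \<bar>s\<bar>" by (simp add: power2_eq_square)
      moreover have "\<bar>s\<bar> > 2 * a^2" using True a0 unfolding R_def by (smt (verit) zero_le_power2)
      moreover have "s^2 - 2*\<bar>s\<bar>*a = \<bar>s\<bar> * (\<bar>s\<bar> - 2*a)" by (simp add: power2_eq_square algebra_simps)
      ultimately show ?thesis using coer[OF T, of s] T by linarith
    next
      case False
      then have TR: "T > R" using out by simp
      have "(\<bar>s\<bar> - a)^2 \<ge> 0" by simp
      then have "s^2 - 2*\<bar>s\<bar>*a \<ge> - (a^2)" by (simp add: power2_eq_square algebra_simps)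
      moreover have "R \<ge> 3 * a^2" unfolding R_def using a0 by simp
      ultimately show ?thesis using coer[OF T, of s] TR by linarith
    qed
    moreover have "g p0 \<le> a^2" using p0 B0 g00 by metis
    ultimately show ?thesis by simp
  qed
  obtain s0 T0 where p0e: "p0 = (s0, T0)" by (cases p0)
  have T0: "T0 \<ge> 0" using p0 p0e unfolding B_def by auto
  define m where "m = g p0"
  show ?thesis
  proof (cases "m = 0")
    case True
    then show ?thesis using T0 p0e unfolding m_def g_def by auto
  next
    case False
    then have m: "m > 0" unfolding m_def g_def by simp
    have mn: "m \<le> norm ((\<xi> - of_real s)^2 + of_real T)" if "T \<ge> 0" for s T
      using glob[OF that, of s] unfolding m_def g_def by simp
    have it: "g (s0, T0 + real j * (m/2)) = m" for j
    proof (induction j)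
      case 0 then show ?case using p0e m_def by simp
    next
      case (Suc j)
      have "norm ((\<xi> - of_real s0)^2 + of_real ((T0 + real j * (m/2)) + m/2)) \<le> m"
        using mazur_step[OF mn, of s0 "T0 + real j * (m/2)" "m/2"] Suc T0 m
        unfolding g_def by (simp add: zero_le_mult_iff)
      moreover have "m \<le> norm ((\<xi> - of_real s0)^2 + of_real ((T0 + real j * (m/2)) + m/2))"
        using T0 m by (intro mn) (simp add: zero_le_mult_iff)
      ultimately have h: "norm ((\<xi> - of_real s0)^2 + of_real ((T0 + real j * (m/2)) + m/2)) = m" by linarith
      have eqT: "T0 + real (Suc j) * (m/2) = (T0 + real j * (m/2)) + m/2" by (simp add: algebra_simps)
      show ?case using h by (simp only: g_def fst_conv snd_conv eqT prod.case)
    qed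
    obtain j :: nat where j: "real j > (m + 2*\<bar>s0\<bar>*a + a^2) / (m/2)"
      using reals_Archimedean2 by blast
    then have "real j * (m/2) > m + 2*\<bar>s0\<bar>*a + a^2" using m by (simp add: field_simps)
    moreover have "s0^2 + (T0 + real j * (m/2)) - 2*\<bar>s0\<bar>*a - a^2 \<le> g (s0, T0 + real j * (m/2))"
      using coer T0 m by (simp add: zero_le_mult_iff)
    ultimately have "g (s0, T0 + real j * (m/2)) > m" using T0
      by (smt (verit) zero_le_power2)
    then show ?thesis using it by simp
  qed
qed

lemma norm_sqrtm1:
  fixes j :: "'k::real_normed_field"
  assumes "j^2 = -1"
  shows "norm j = 1"
proof -
  have "norm j ^ 2 = 1" using assms by (metis norm_minus_cancel norm_one norm_power)
  then show ?thesis using norm_ge_zero[of j] by (auto simp add: power2_eq_1_iff)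
qed

lemma bound_ab:
  fixes j :: "'k::real_normed_field"
  assumes j: "j^2 = -1"
  shows "\<bar>a\<bar> + \<bar>b\<bar> \<le> 2 * norm (of_real a + of_real b * j)"
proof -
  let ?z = "of_real a + of_real b * j :: 'k"
  have nj: "norm j = 1" using norm_sqrtm1[OF j] .
  have "?z * (of_real a - of_real b * j) = of_real a ^ 2 - of_real b ^ 2 * j^2"
    by (simp add: power2_eq_square algebra_simps)
  also have "\<dots> = of_real (a^2 + b^2)" using j by simp
  finally have "?z * (of_real a - of_real b * j) = of_real (a^2 + b^2)" .
  then have "norm (of_real (a^2 + b^2) :: 'k) = norm ?z * norm (of_real a - of_real b * j :: 'k)"
    by (metis norm_mult)
  moreover have "norm (of_real (a^2 + b^2) :: 'k) = a^2 + b^2" by (subst norm_of_real) simp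
  ultimately have "a^2 + b^2 = norm ?z * norm (of_real a - of_real b * j :: 'k)" by simp
  also have "\<dots> \<le> norm ?z * (\<bar>a\<bar> + \<bar>b\<bar>)"
    using norm_triangle_ineq4[of "of_real a :: 'k" "of_real b * j"]
    by (intro mult_left_mono) (auto simp: norm_mult nj)
  finally have h: "a^2 + b^2 \<le> norm ?z * (\<bar>a\<bar> + \<bar>b\<bar>)" .
  have h2: "(\<bar>a\<bar> + \<bar>b\<bar>)^2 \<le> 2 * (a^2 + b^2)"
  proof -
    have "0 \<le> (\<bar>a\<bar> - \<bar>b\<bar>)^2" by simp
    then have "2*\<bar>a\<bar>*\<bar>b\<bar> \<le> \<bar>a\<bar>^2 + \<bar>b\<bar>^2" by (simp add: power2_diff)
    then show ?thesis by (simp add: power2_sum)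
  qed
  show ?thesis
  proof (cases "\<bar>a\<bar> + \<bar>b\<bar> = 0")
    case True then have "a = 0" "b = 0" by auto
    then show ?thesis by simp
  next
    case False
    then have p: "\<bar>a\<bar> + \<bar>b\<bar> > 0" by simp
    have "(\<bar>a\<bar> + \<bar>b\<bar>) * (\<bar>a\<bar> + \<bar>b\<bar>) \<le> (2 * norm ?z) * (\<bar>a\<bar> + \<bar>b\<bar>)"
    proof -
      have "(\<bar>a\<bar> + \<bar>b\<bar>) * (\<bar>a\<bar> + \<bar>b\<bar>) \<le> 2 * (a^2 + b^2)" using h2 by (simp add: power2_eq_square)
      also have "\<dots> \<le> 2 * (norm ?z * (\<bar>a\<bar> + \<bar>b\<bar>))" using h by simp
      finally show ?thesis by simp
    qed
    then show ?thesis using p by simp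
  qed
qed

lemma k_struct:
  "\<exists>j::'k::real_normed_field. \<forall>z. \<exists>a b. z = of_real a + of_real b * j \<and> \<bar>a\<bar> + \<bar>b\<bar> \<le> 2 * norm z"
proof (cases "\<exists>j::'k. j^2 = -1")
  case True
  then obtain j :: 'k where j: "j^2 = -1" by blast
  have "\<exists>a b. z = of_real a + of_real b * j" for z
  proof -
    obtain s T where sT: "T \<ge> 0" "(z - of_real s)^2 + of_real T = 0" using quad_root by blast
    show ?thesis
    proof (cases "T = 0")
      case True
      then have "z = of_real s" using sT by simp
      then show ?thesis by (intro exI[of _ s] exI[of _ 0]) simp
    next
      case False
      define t where "t = sqrt T"
      have t: "t > 0" "t^2 = T" using False sT unfolding t_def by auto
      define u where "u = (z - of_real s) / of_real t"
      have "u^2 = (z - of_real s)^2 / of_real (t^2)" unfolding u_def by (simp add: power_divide)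
      also have "\<dots> = -1" using sT t False by (simp add: eq_neg_iff_add_eq_0[symmetric])
      finally have "(u - j) * (u + j) = 0" using j by (simp add: power2_eq_square algebra_simps)
      then have "u = j \<or> u = -j" by (simp add: eq_neg_iff_add_eq_0)
      moreover have "z = of_real s + of_real t * u" unfolding u_def using t by simp
      ultimately show ?thesis by (metis mult_minus_left mult_minus_right of_real_minus)
    qed
  qed
  then show ?thesis using bound_ab[OF j] by metis
next
  case False
  have "\<exists>a b. z = of_real a + of_real b * 0 \<and> \<bar>a\<bar> + \<bar>b\<bar> \<le> 2 * norm z" for z :: 'k
  proof -
    obtain s T where sT: "T \<ge> 0" "(z - of_real s)^2 + of_real T = 0" using quad_root by blast
    have "T = 0"
    proof (rule ccontr)
      assume "T \<noteq> 0"
      define t where "t = sqrt T"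
      have t: "t > 0" "t^2 = T" using \<open>T \<noteq> 0\<close> sT unfolding t_def by auto
      have "((z - of_real s) / of_real t)^2 = (z - of_real s)^2 / of_real (t^2)" by (simp add: power_divide)
      also have "\<dots> = -1" using sT t \<open>T \<noteq> 0\<close> by (simp add: eq_neg_iff_add_eq_0[symmetric])
      finally show False using False by blast
    qed
    then have "z = of_real s" using sT by simp
    then show ?thesis by (intro exI[of _ s] exI[of _ 0]) simp
  qed
  then show ?thesis by blast
qed

lemma compact_cball_k: "compact (cball (0::'k::real_normed_field) R)"
proof -
  obtain j :: 'k where j: "\<forall>z. \<exists>a b. z = of_real a + of_real b * j \<and> \<bar>a\<bar> + \<bar>b\<bar> \<le> 2 * norm z"
    using k_struct by blast
  define h where "h = (\<lambda>p::real\<times>real. of_real (fst p) + of_real (snd p) * j)"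
  define B where "B = {-2*R..2*R} \<times> {-2*R..2*R}"
  have cB: "compact (h ` B)" unfolding B_def h_def
    by (intro compact_continuous_image compact_Times compact_Icc continuous_intros)
  have "cball 0 R \<subseteq> h ` B"
  proof
    fix z :: 'k assume "z \<in> cball 0 R"
    then have nz: "norm z \<le> R" by simp
    obtain a b where ab: "z = of_real a + of_real b * j" "\<bar>a\<bar> + \<bar>b\<bar> \<le> 2 * norm z" using j by blast
    then have "(a,b) \<in> B" unfolding B_def using nz by auto
    then show "z \<in> h ` B" unfolding h_def using ab by force
  qed
  then have "cball 0 R = h ` B \<inter> cball 0 R" by blast
  then show ?thesis by (metis compact_Int_closed[OF cB closed_cball])
qed

definition fipn :: "nat set set \<Rightarrow> bool" where
  "fipn A \<longleftrightarrow> (\<forall>G. finite G \<and> G \<subseteq> A \<longrightarrow> \<Inter>G \<noteq> {})"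

lemma ultra_exists:
  "\<exists>F::nat filter. F \<noteq> bot \<and> F \<le> sequentially \<and> (\<forall>P. eventually P F \<or> eventually (\<lambda>n. \<not> P n) F)"
proof -
  define A0 where "A0 = range (\<lambda>m::nat. {m..})"
  have fA0: "fipn A0" unfolding fipn_def
  proof (intro allI impI)
    fix G assume G: "finite G \<and> G \<subseteq> A0"
    then obtain M where "G \<subseteq> (\<lambda>m. {m..}) ` M" "finite M"
      using finite_subset_image[of G "\<lambda>m::nat. {m..}" UNIV] unfolding A0_def by blast
    then have "Max (insert 0 M) \<in> \<Inter>G" by (auto intro: Max_ge)
    then show "\<Inter>G \<noteq> {}" by blast
  qed
  define \<A> where "\<A> = {A. A0 \<subseteq> A \<and> fipn A}"
  have "\<exists>M\<in>\<A>. \<forall>X\<in>\<A>. M \<subseteq> X \<longrightarrow> X = M"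
  proof (rule Zorn_Lemma2, intro ballI)
    fix C assume C: "C \<in> chains \<A>"
    show "\<exists>U\<in>\<A>. \<forall>X\<in>C. X \<subseteq> U"
    proof (cases "C = {}")
      case True then show ?thesis using fA0 unfolding \<A>_def by auto
    next
      case False
      have "\<Union>C \<in> \<A>" unfolding \<A>_def
      proof (intro CollectI conjI)
        show "A0 \<subseteq> \<Union>C" using C False unfolding chains_def \<A>_def by blast
        show "fipn (\<Union>C)" unfolding fipn_def
        proof (intro allI impI)
          fix G assume G: "finite G \<and> G \<subseteq> \<Union>C"
          have ch: "subset.chain \<A> C" using C by (simp add: chains_alt_def)
          obtain B where "B \<in> C" "G \<subseteq> B"
            using finite_subset_Union_chain[of G C \<A>] G False ch by blast
          then show "\<Inter>G \<noteq> {}" using G C unfolding chains_def \<A>_def fipn_def by blast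
        qed
      qed
      then show ?thesis by blast
    qed
  qed
  then obtain M where M\<A>: "M \<in> \<A>" and mx0: "\<forall>X\<in>\<A>. M \<subseteq> X \<longrightarrow> X = M" by blast
  have M: "A0 \<subseteq> M" "fipn M" using M\<A> unfolding \<A>_def by auto
  have mx: "X = M" if "A0 \<subseteq> X" "fipn X" "M \<subseteq> X" for X
    using mx0 that unfolding \<A>_def by blast
  have ins: "P \<in> M" if "fipn (insert P M)" for P
    using mx[of "insert P M"] that M by blast
  have emp: "{} \<notin> M"
  proof
    assume "{} \<in> M"
    then have "finite {{}::nat set} \<and> {{}} \<subseteq> M" by simp
    moreover have "\<Inter>{{}::nat set} = {}" by simp
    ultimately show False using M(2) unfolding fipn_def by blast
  qed
  have cmp: "P \<in> M \<or> - P \<in> M" for P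
  proof (rule ccontr)
    assume n: "\<not> (P \<in> M \<or> - P \<in> M)"
    then have f1: "\<not> fipn (insert P M)" and f2: "\<not> fipn (insert (-P) M)" using ins by blast+
    from f1 obtain G1 where G1: "finite G1" "G1 \<subseteq> insert P M" "\<Inter>G1 = {}"
      unfolding fipn_def by auto
    from f2 obtain G2 where G2: "finite G2" "G2 \<subseteq> insert (-P) M" "\<Inter>G2 = {}"
      unfolding fipn_def by auto
    define G where "G = (G1 - {P}) \<union> (G2 - {-P})"
    have "finite G" "G \<subseteq> M" using G1 G2 unfolding G_def by auto
    moreover have "\<Inter>G = {}"
    proof -
      have "G1 \<subseteq> insert P (G1 - {P})" by blast
      then have "\<Inter>(insert P (G1 - {P})) \<subseteq> \<Inter>G1" by (rule Inter_anti_mono)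
      then have "\<Inter>(G1 - {P}) \<inter> P = {}" using G1(3) by auto
      moreover have "G2 \<subseteq> insert (-P) (G2 - {-P})" by blast
      then have "\<Inter>(insert (-P) (G2 - {-P})) \<subseteq> \<Inter>G2" by (rule Inter_anti_mono)
      then have "\<Inter>(G2 - {-P}) \<inter> -P = {}" using G2(3) by auto
      ultimately have "\<Inter>(G1 - {P}) \<inter> \<Inter>(G2 - {-P}) = {}" by blast
      then show ?thesis unfolding G_def by (simp add: Inter_Un_distrib)
    qed
    ultimately show False using M(2) unfolding fipn_def by auto
  qed
  have upw: "Q \<in> M" if "P \<in> M" "P \<subseteq> Q" for P Q
  proof (rule ccontr)
    assume "Q \<notin> M"
    then have "-Q \<in> M" using cmp by blast
    moreover have "finite {P, -Q}" by simp
    ultimately have "\<Inter>{P, -Q} \<noteq> {}" using M(2) that unfolding fipn_def by blast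
    then show False using that by auto
  qed
  have cap: "P \<inter> Q \<in> M" if "P \<in> M" "Q \<in> M" for P Q
  proof (rule ccontr)
    assume "P \<inter> Q \<notin> M"
    then have "-(P \<inter> Q) \<in> M" using cmp by blast
    moreover have "finite {P, Q, -(P \<inter> Q)}" by simp
    ultimately have "\<Inter>{P, Q, -(P \<inter> Q)} \<noteq> {}" using M(2) that unfolding fipn_def by blast
    then show False by auto
  qed
  have U: "UNIV \<in> M" using M(1) unfolding A0_def by (metis atLeast_0 rangeI subsetD)
  define F :: "nat filter" where "F = Abs_filter (\<lambda>P. {n. P n} \<in> M)"
  have isf: "is_filter (\<lambda>P. {n. P n} \<in> M)"
  proof
    show "{n. True} \<in> M" using U by simp
    show "{n. P n \<and> Q n} \<in> M" if "{n. P n} \<in> M" "{n. Q n} \<in> M" for P Q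
      using cap[OF that] by (simp add: Collect_conj_eq)
    show "{n. Q n} \<in> M" if "\<forall>x. P x \<longrightarrow> Q x" "{n. P n} \<in> M" for P Q
      using upw[OF that(2)] that(1) by blast
  qed
  have ev: "eventually P F \<longleftrightarrow> {n. P n} \<in> M" for P
    unfolding F_def using eventually_Abs_filter[OF isf] .
  have "F \<noteq> bot" using emp ev[of "\<lambda>_. False"] by (auto simp: eventually_False[symmetric])
  moreover have "F \<le> sequentially"
  proof (rule filter_leI)
    fix P assume "eventually P sequentially"
    then obtain N where "\<forall>n\<ge>N. P n" by (auto simp: eventually_sequentially)
    moreover have "{N..} \<in> M" using M(1) unfolding A0_def by blast
    ultimately show "eventually P F" unfolding ev using upw by (metis atLeast_iff mem_Collect_eq subsetI)
  qed
  moreover have "\<forall>P. eventually P F \<or> eventually (\<lambda>n. \<not> P n) F"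
    using cmp unfolding ev by (metis Collect_neg_eq)
  ultimately show ?thesis by blast
qed

lemma ultra_lim:
  fixes x :: "nat \<Rightarrow> 'b::t2_space"
  assumes F: "F \<noteq> bot" and ul: "\<forall>P. eventually P F \<or> eventually (\<lambda>n. \<not> P n) F"
    and S: "compact S" and ev: "eventually (\<lambda>n. x n \<in> S) F"
  shows "\<exists>L\<in>S. (x \<longlongrightarrow> L) F"
proof -
  have G: "filtermap x F \<noteq> bot" using F by (simp add: filtermap_bot_iff)
  have "eventually (\<lambda>y. y \<in> S) (filtermap x F)" using ev by (simp add: eventually_filtermap)
  then obtain L where L: "L \<in> S" "inf (nhds L) (filtermap x F) \<noteq> bot"
    using S G unfolding compact_filter by blast
  have "(x \<longlongrightarrow> L) F"
  proof (rule topological_tendstoI)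
    fix T assume T: "open T" "L \<in> T"
    show "eventually (\<lambda>n. x n \<in> T) F"
    proof (rule ccontr)
      assume "\<not> eventually (\<lambda>n. x n \<in> T) F"
      then have "eventually (\<lambda>n. x n \<notin> T) F" using ul by blast
      then have e1: "eventually (\<lambda>y. y \<notin> T) (filtermap x F)" by (simp add: eventually_filtermap)
      have e2: "eventually (\<lambda>y. y \<in> T) (nhds L)" using T by (rule eventually_nhds_in_open)
      have "eventually (\<lambda>y. False) (inf (nhds L) (filtermap x F))"
        unfolding eventually_inf using e1 e2 by blast
      then show False using L(2) by (simp add: eventually_False)
    qed
  qed
  then show ?thesis using L by blast
qed

lemma dual_bound:
  fixes scl :: "'k::real_normed_field \<Rightarrow> 'a::ab_group_add \<Rightarrow> 'a"
  assumes vs: "vector_space scl" and ban: "banach_on scl X N"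
    and \<phi>: "\<phi> \<in> dual_set scl X N" and y: "y \<in> X"
  shows "norm (\<phi> y) \<le> dual_norm X N \<phi> * N y" and "dual_norm X N \<phi> \<ge> 0"
proof -
  interpret v: vector_space scl by (rule vs)
  have sub: "subspace_on scl X" and nrm: "norm_on scl X N" using ban unfolding banach_on_def by auto
  have lin: "lin_fun scl X \<phi>" and bd: "bounded_fun X N \<phi>" using \<phi> unfolding dual_set_def by auto
  obtain C where C: "\<forall>x\<in>X. norm (\<phi> x) \<le> C * N x" using bd unfolding bounded_fun_def by blast
  define S where "S = {norm (\<phi> x) | x. x \<in> X \<and> N x \<le> 1}"
  have bdd: "bdd_above S"
  proof (rule bdd_aboveI)
    fix z assume "z \<in> S"
    then obtain x where x: "z = norm (\<phi> x)" "x \<in> X" "N x \<le> 1" unfolding S_def by blast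
    have "N x \<ge> 0" using nrm x unfolding norm_on_def by blast
    then have "C * N x \<le> max C 0" using x(3)
      by (cases "C \<ge> 0") (auto intro: mult_left_le mult_nonpos_nonneg order.trans[of _ 0])
    then show "z \<le> max C 0" using C x by force
  qed
  have dn: "dual_norm X N \<phi> = Sup S" unfolding dual_norm_def S_def by simp
  have \<phi>0: "\<phi> 0 = 0"
  proof -
    have "0 \<in> X" using sub unfolding subspace_on_def by blast
    then have "\<phi> (0 + 0) = \<phi> 0 + \<phi> 0" using lin unfolding lin_fun_def by blast
    then show ?thesis by simp
  qed
  have "0 \<in> S" unfolding S_def using sub nrm \<phi>0 unfolding subspace_on_def norm_on_def by force
  then show "dual_norm X N \<phi> \<ge> 0" using bdd dn by (metis cSup_upper)
  show "norm (\<phi> y) \<le> dual_norm X N \<phi> * N y"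
  proof (cases "N y = 0")
    case True
    then have "y = 0" using nrm y unfolding norm_on_def by blast
    then show ?thesis using True \<phi>0 by simp
  next
    case False
    then have t: "N y > 0" using nrm y unfolding norm_on_def by force
    define y' where "y' = scl (of_real (1 / N y)) y"
    have y'X: "y' \<in> X" using sub y unfolding subspace_on_def y'_def by blast
    have "N y' = norm (of_real (1 / N y) :: 'k) * N y" using nrm y unfolding norm_on_def y'_def by blast
    then have Ny': "N y' = 1" using t by (simp add: norm_divide)
    have "\<phi> y' = of_real (1 / N y) * \<phi> y" using lin y unfolding lin_fun_def y'_def by blast
    then have "norm (\<phi> y') = norm (\<phi> y) / N y" using t by (simp add: norm_mult norm_divide)
    moreover have "norm (\<phi> y') \<in> S" unfolding S_def using y'X Ny' by auto
    ultimately have "norm (\<phi> y) / N y \<le> Sup S" using bdd by (metis cSup_upper)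
    then show ?thesis using t dn by (simp add: divide_le_eq)
  qed
qed

lemma weak_limit:
  fixes scl :: "'k::real_normed_field \<Rightarrow> 'a::ab_group_add \<Rightarrow> 'a" and r :: "nat \<Rightarrow> 'a"
  assumes vs: "vector_space scl" and ban: "banach_on scl X N" and refl: "reflexive_on scl X N"
    and r: "\<And>n. r n \<in> X" and bnd: "\<And>n. N (r n) \<le> C"
    and F: "F \<noteq> bot" and ul: "\<forall>P. eventually P F \<or> eventually (\<lambda>n. \<not> P n) F"
  shows "\<exists>x\<in>X. \<forall>\<phi>\<in>dual_set scl X N. ((\<lambda>n. \<phi> (r n)) \<longlongrightarrow> \<phi> x) F"
proof -
  have nrm: "norm_on scl X N" using ban unfolding banach_on_def by auto
  have C0: "C \<ge> 0" using bnd[of 0] r[of 0] nrm unfolding norm_on_def by (meson order.trans)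
  have ex: "\<exists>L. ((\<lambda>n. \<phi> (r n)) \<longlongrightarrow> L) F \<and> norm L \<le> dual_norm X N \<phi> * C"
    if \<phi>: "\<phi> \<in> dual_set scl X N" for \<phi>
  proof -
    have dn0: "dual_norm X N \<phi> \<ge> 0" using dual_bound(2)[OF vs ban \<phi> r[of 0]] .
    have inb: "\<phi> (r n) \<in> cball 0 (dual_norm X N \<phi> * C)" for n
    proof -
      have "dual_norm X N \<phi> * N (r n) \<le> dual_norm X N \<phi> * C" using bnd[of n] dn0 by (rule mult_left_mono)
      then have "norm (\<phi> (r n)) \<le> dual_norm X N \<phi> * C" using dual_bound(1)[OF vs ban \<phi> r[of n]] by linarith
      then show ?thesis by simp
    qed
    obtain L where L: "L \<in> cball 0 (dual_norm X N \<phi> * C)" "((\<lambda>n. \<phi> (r n)) \<longlongrightarrow> L) F"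
      using ultra_lim[OF F ul compact_cball_k always_eventually[of "\<lambda>n. \<phi> (r n) \<in> cball 0 (dual_norm X N \<phi> * C)"]] inb by blast
    then show ?thesis by auto
  qed
  define \<Phi> where "\<Phi> = (\<lambda>\<phi>::'a \<Rightarrow> 'k. Lim F (\<lambda>n. \<phi> (r n)))"
  have \<Phi>t: "((\<lambda>n. \<phi> (r n)) \<longlongrightarrow> \<Phi> \<phi>) F" "norm (\<Phi> \<phi>) \<le> dual_norm X N \<phi> * C"
    if "\<phi> \<in> dual_set scl X N" for \<phi>
    using ex[OF that] tendsto_Lim[OF F] unfolding \<Phi>_def by auto
  have "\<exists>x\<in>X. \<forall>\<phi>\<in>dual_set scl X N. \<Phi> \<phi> = \<phi> x"
    using refl unfolding reflexive_on_def
  proof (elim allE impE)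
    show "(\<forall>\<phi>\<in>dual_set scl X N. \<forall>\<psi>\<in>dual_set scl X N. \<Phi> (\<lambda>x. \<phi> x + \<psi> x) = \<Phi> \<phi> + \<Phi> \<psi>) \<and>
      (\<forall>a. \<forall>\<phi>\<in>dual_set scl X N. \<Phi> (\<lambda>x. a * \<phi> x) = a * \<Phi> \<phi>) \<and>
      (\<exists>C. \<forall>\<phi>\<in>dual_set scl X N. norm (\<Phi> \<phi>) \<le> C * dual_norm X N \<phi>)"
    proof (intro conjI ballI allI exI)
      fix \<phi> \<psi> assume a: "\<phi> \<in> dual_set scl X N" "\<psi> \<in> dual_set scl X N"
      show "\<Phi> (\<lambda>x. \<phi> x + \<psi> x) = \<Phi> \<phi> + \<Phi> \<psi>"
        using tendsto_Lim[OF F tendsto_add[OF \<Phi>t(1)[OF a(1)] \<Phi>t(1)[OF a(2)]]] by (simp add: \<Phi>_def)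
    next
      fix a \<phi> assume a: "\<phi> \<in> dual_set scl X N"
      show "\<Phi> (\<lambda>x. a * \<phi> x) = a * \<Phi> \<phi>"
        using tendsto_Lim[OF F tendsto_mult_left[OF \<Phi>t(1)[OF a]]] by (simp add: \<Phi>_def)
    next
      fix \<phi> assume a: "\<phi> \<in> dual_set scl X N"
      show "norm (\<Phi> \<phi>) \<le> C * dual_norm X N \<phi>" using \<Phi>t(2)[OF a] by (simp add: mult.commute)
    qed
  qed
  then obtain x where "x \<in> X" "\<forall>\<phi>\<in>dual_set scl X N. \<Phi> \<phi> = \<phi> x" by blast
  then show ?thesis using \<Phi>t(1) by metis
qed

definition trunc :: "nat \<Rightarrow> (nat \<Rightarrow> 'k::zero) \<Rightarrow> nat \<Rightarrow> 'k" where
  "trunc k c = (\<lambda>i. if i < k then c i else 0)"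

locale setting =
  fixes scl :: "'k::real_normed_field \<Rightarrow> 'a::ab_group_add \<Rightarrow> 'a"
    and X :: "nat \<Rightarrow> 'a set" and N :: "nat \<Rightarrow> 'a \<Rightarrow> real"
    and g :: "nat \<Rightarrow> 'a \<Rightarrow> 'k"
  assumes vs: "vector_space scl"
    and X_props: "props_iii scl X N"
    and X_refl: "\<forall>s. reflexive_on scl (X s) (N s)"
    and g_dual: "\<forall>i. g i \<in> dual_set scl (X 0) (N 0)"
    and g_nonzero: "\<forall>i. \<exists>x\<in>X 0. g i x \<noteq> 0"
begin

interpretation v: vector_space scl by (rule vs)

lemma ban: "banach_on scl (X s) (N s)" using X_props unfolding props_iii_def by blast
lemma sub: "subspace_on scl (X s)" using ban unfolding banach_on_def by blast
lemma nrm: "norm_on scl (X s) (N s)" using ban unfolding banach_on_def by blast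

lemma X0: "0 \<in> X s" using sub unfolding subspace_on_def by blast
lemma Xadd: "x \<in> X s \<Longrightarrow> y \<in> X s \<Longrightarrow> x + y \<in> X s" using sub unfolding subspace_on_def by blast
lemma Xscl: "x \<in> X s \<Longrightarrow> scl a x \<in> X s" using sub unfolding subspace_on_def by blast
lemma Xneg: "x \<in> X s \<Longrightarrow> - x \<in> X s" using Xscl[of x s "-1"] by simp
lemma Xdiff: "x \<in> X s \<Longrightarrow> y \<in> X s \<Longrightarrow> x - y \<in> X s" using Xadd[of x s "-y"] Xneg[of y s] by simp

lemma N_nonneg: "x \<in> X s \<Longrightarrow> N s x \<ge> 0" using nrm unfolding norm_on_def by blast
lemma N_zero: "x \<in> X s \<Longrightarrow> N s x = 0 \<longleftrightarrow> x = 0" using nrm unfolding norm_on_def by blast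
lemma N_tri: "x \<in> X s \<Longrightarrow> y \<in> X s \<Longrightarrow> N s (x + y) \<le> N s x + N s y" using nrm unfolding norm_on_def by blast
lemma N_scl: "x \<in> X s \<Longrightarrow> N s (scl a x) = norm a * N s x" using nrm unfolding norm_on_def by blast
lemma N_0: "N s 0 = 0" using N_zero[OF X0] by simp
lemma N_neg: "x \<in> X s \<Longrightarrow> N s (- x) = N s x" using N_scl[of x s "-1"] by simp
lemma N_diff_sym: "x \<in> X s \<Longrightarrow> y \<in> X s \<Longrightarrow> N s (x - y) = N s (y - x)"
  using N_neg[OF Xdiff[of y s x]] by simp

lemma X_Suc: "X (Suc s) \<subseteq> X s" using X_props unfolding props_iii_def by blast
lemma X_mono: "s \<le> t \<Longrightarrow> X t \<subseteq> X s"
  by (induction t rule: dec_induct) (use X_Suc in auto)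
lemma N_mono: "s \<le> t \<Longrightarrow> y \<in> X t \<Longrightarrow> N s y \<le> N t y"
proof (induction t rule: dec_induct)
  case base then show ?case by simp
next
  case (step t)
  have "y \<in> X t" using step.prems X_Suc by blast
  then have "N s y \<le> N t y" using step.IH by blast
  moreover have "N t y \<le> N (Suc t) y" using X_props step.prems unfolding props_iii_def by blast
  ultimately show ?case by simp
qed

definition XF where "XF = (\<Inter>s. X s)"

lemma XF_sub: "XF \<subseteq> X s" unfolding XF_def by blast
lemma XF_dense: "dense_on XF (X s) (N s)" using X_props unfolding props_iii_def XF_def by blast
lemma XF_scl: "x \<in> XF \<Longrightarrow> scl a x \<in> XF" unfolding XF_def using Xscl by blast

lemma g_lin: "x \<in> X 0 \<Longrightarrow> y \<in> X 0 \<Longrightarrow> g i (x + y) = g i x + g i y"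
  and g_hom: "x \<in> X 0 \<Longrightarrow> g i (scl a x) = a * g i x"
  using g_dual unfolding dual_set_def lin_fun_def by blast+

lemma g_zero_out: "x \<notin> X 0 \<Longrightarrow> g i x = 0" using g_dual unfolding dual_set_def by blast

lemma g_neg: "x \<in> X 0 \<Longrightarrow> g i (- x) = - g i x" using g_hom[of x i "-1"] by simp
lemma g_diff: "x \<in> X 0 \<Longrightarrow> y \<in> X 0 \<Longrightarrow> g i (x - y) = g i x - g i y"
  using g_lin[of x "-y" i] g_neg[of y i] Xneg[of y 0] by simp

lemma g_bound: "\<exists>C>0. \<forall>s. \<forall>x\<in>X s. norm (g i x) \<le> C * N s x"
proof -
  obtain C where C: "\<forall>x\<in>X 0. norm (g i x) \<le> C * N 0 x"
    using g_dual unfolding dual_set_def bounded_fun_def by blast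
  define C' where "C' = max C 1"
  have "norm (g i x) \<le> C' * N s x" if x: "x \<in> X s" for s x
  proof -
    have x0: "x \<in> X 0" using x X_mono[of 0 s] by auto
    have "norm (g i x) \<le> C * N 0 x" using C x0 by blast
    also have "\<dots> \<le> C' * N 0 x" unfolding C'_def using N_nonneg[OF x0] by (intro mult_right_mono) auto
    also have "\<dots> \<le> C' * N s x" unfolding C'_def using N_mono[of 0 s x] x by (intro mult_left_mono) auto
    finally show ?thesis .
  qed
  moreover have "C' > 0" unfolding C'_def by simp
  ultimately show ?thesis by blast
qed

definition gC where "gC i = (SOME C. C > 0 \<and> (\<forall>s. \<forall>x\<in>X s. norm (g i x) \<le> C * N s x))"

lemma gC: "gC i > 0" "x \<in> X s \<Longrightarrow> norm (g i x) \<le> gC i * N s x"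
  using someI_ex[OF g_bound[of i]] unfolding gC_def by blast+

lemma g_XF_one: "\<exists>f\<in>XF. g j f = 1"
proof -
  obtain x where x: "x \<in> X 0" "g j x \<noteq> 0" using g_nonzero by blast
  have e: "norm (g j x) / gC j > 0" using x gC(1) by simp
  obtain y where y: "y \<in> XF" "N 0 (x - y) < norm (g j x) / gC j"
    using XF_dense[of 0] x e unfolding dense_on_def by blast
  have y0: "y \<in> X 0" using y XF_sub by blast
  have "norm (g j x - g j y) \<le> gC j * N 0 (x - y)" using gC(2)[OF Xdiff[OF x(1) y0]] g_diff[OF x(1) y0] by simp
  also have "\<dots> < norm (g j x)" using y(2) gC(1)[of j] by (simp add: field_simps)
  finally have gy: "g j y \<noteq> 0" by auto
  define f where "f = scl (inverse (g j y)) y"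
  have "f \<in> XF" unfolding f_def using y XF_scl by blast
  moreover have "g j f = 1" unfolding f_def using g_hom[OF y0] gy by simp
  ultimately show ?thesis by blast
qed

abbreviation "Th s \<equiv> Theta X g s"
abbreviation "Tn s \<equiv> Theta_norm X N g s"
abbreviation "Ms s c \<equiv> Mset X g s c"

lemma Ms_iff: "f \<in> Ms s c \<longleftrightarrow> f \<in> X s \<and> (\<forall>i. norm (c i) \<le> norm (g i f))"
  unfolding Mset_def by simp
lemma Th_iff: "c \<in> Th s \<longleftrightarrow> Ms s c \<noteq> {}" unfolding Theta_def by simp
lemma Tn_def': "Tn s c = Inf (N s ` Ms s c)" unfolding Theta_norm_def by simp

lemma bdd_Ms: "bdd_below (N s ` Ms s c)"
  by (rule bdd_belowI[of _ 0]) (auto simp: Ms_iff N_nonneg)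

lemma Tn_lower: "f \<in> Ms s c \<Longrightarrow> Tn s c \<le> N s f"
  unfolding Tn_def' by (rule cInf_lower) (auto simp: bdd_Ms)

lemma Tn_greatest: "c \<in> Th s \<Longrightarrow> (\<And>f. f \<in> Ms s c \<Longrightarrow> a \<le> N s f) \<Longrightarrow> a \<le> Tn s c"
  unfolding Tn_def' Th_iff by (rule cInf_greatest) auto

lemma Tn_nonneg: "c \<in> Th s \<Longrightarrow> 0 \<le> Tn s c"
  by (rule Tn_greatest) (auto simp: Ms_iff N_nonneg)

lemma Tn_less: "c \<in> Th s \<Longrightarrow> Tn s c < e \<Longrightarrow> \<exists>f\<in>Ms s c. N s f < e"
  unfolding Tn_def' Th_iff using cInf_lessD[of "N s ` Ms s c" e] by auto

lemma Ms_anti: "(\<forall>i. norm (d i) \<le> norm (c i)) \<Longrightarrow> Ms s c \<subseteq> Ms s d"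
  by (auto simp: Ms_iff) (meson order.trans)

lemma solid_Th: "c \<in> Th s \<Longrightarrow> (\<forall>i. norm (d i) \<le> norm (c i)) \<Longrightarrow> d \<in> Th s \<and> Tn s d \<le> Tn s c"
proof -
  assume c: "c \<in> Th s" and dc: "\<forall>i. norm (d i) \<le> norm (c i)"
  have sub: "Ms s c \<subseteq> Ms s d" using Ms_anti[OF dc] .
  then have d: "d \<in> Th s" using c unfolding Th_iff by blast
  have "Tn s d \<le> Tn s c" using c by (rule Tn_greatest) (use sub Tn_lower in blast)
  then show ?thesis using d by blast
qed

lemma coord: "c \<in> Th s \<Longrightarrow> norm (c i) \<le> gC i * Tn s c"
proof -
  assume c: "c \<in> Th s"
  have "norm (c i) / gC i \<le> Tn s c"
  proof (rule Tn_greatest[OF c])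
    fix f assume f: "f \<in> Ms s c"
    then have "norm (c i) \<le> gC i * N s f" using gC(2)[of f s i] unfolding Ms_iff by (meson order.trans)
    then show "norm (c i) / gC i \<le> N s f" using gC(1)[of i] by (simp add: divide_le_eq mult.commute)
  qed
  then show ?thesis using gC(1)[of i] by (simp add: divide_le_eq mult.commute)
qed

lemma zero_Th: "(\<lambda>i. 0) \<in> Th s" and Tn_zero: "Tn s (\<lambda>i. 0) = 0"
proof -
  have "0 \<in> Ms s (\<lambda>i. 0)" unfolding Ms_iff using X0 by simp
  then show z: "(\<lambda>i. 0) \<in> Th s" unfolding Th_iff by blast
  have "Tn s (\<lambda>i. 0) \<le> 0" using Tn_lower[OF \<open>0 \<in> Ms s (\<lambda>i. 0)\<close>] N_0 by simp
  then show "Tn s (\<lambda>i. 0) = 0" using Tn_nonneg[OF z] by simp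
qed

lemma Ms_scl: "f \<in> Ms s c \<Longrightarrow> scl a f \<in> Ms s (\<lambda>i. a * c i)"
proof -
  assume f: "f \<in> Ms s c"
  then have fX: "f \<in> X s" and fc: "\<forall>i. norm (c i) \<le> norm (g i f)" unfolding Ms_iff by auto
  have f0: "f \<in> X 0" using fX X_mono[of 0 s] by auto
  show ?thesis unfolding Ms_iff
  proof (intro conjI allI)
    show "scl a f \<in> X s" using Xscl[OF fX] .
    fix i show "norm (a * c i) \<le> norm (g i (scl a f))"
      using fc g_hom[OF f0] by (simp add: norm_mult mult_left_mono)
  qed
qed

lemma scl_Th_le: "c \<in> Th s \<Longrightarrow> (\<lambda>i. a * c i) \<in> Th s \<and> Tn s (\<lambda>i. a * c i) \<le> norm a * Tn s c"
proof -
  assume c: "c \<in> Th s"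
  have ac: "(\<lambda>i. a * c i) \<in> Th s" using c Ms_scl unfolding Th_iff by blast
  show ?thesis
  proof (cases "a = 0")
    case True then show ?thesis using zero_Th Tn_zero by simp
  next
    case False
    have "Tn s (\<lambda>i. a * c i) / norm a \<le> Tn s c"
    proof (rule Tn_greatest[OF c])
      fix f assume f: "f \<in> Ms s c"
      have "Tn s (\<lambda>i. a * c i) \<le> N s (scl a f)" using Tn_lower[OF Ms_scl[OF f]] .
      also have "\<dots> = norm a * N s f" using f N_scl unfolding Ms_iff by blast
      finally show "Tn s (\<lambda>i. a * c i) / norm a \<le> N s f" using False by (simp add: divide_le_eq mult.commute)
    qed
    then show ?thesis using ac False by (simp add: divide_le_eq mult.commute)
  qed
qed

lemma scl_Th: "c \<in> Th s \<Longrightarrow> (\<lambda>i. a * c i) \<in> Th s \<and> Tn s (\<lambda>i. a * c i) = norm a * Tn s c"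
proof -
  assume c: "c \<in> Th s"
  have h: "(\<lambda>i. a * c i) \<in> Th s" "Tn s (\<lambda>i. a * c i) \<le> norm a * Tn s c" using scl_Th_le[OF c] by auto
  show ?thesis
  proof (cases "a = 0")
    case True then show ?thesis using zero_Th Tn_zero by simp
  next
    case False
    have "Tn s (\<lambda>i. inverse a * (a * c i)) \<le> norm (inverse a) * Tn s (\<lambda>i. a * c i)"
      using scl_Th_le[OF h(1)] by blast
    moreover have "(\<lambda>i. inverse a * (a * c i)) = c" using False by auto
    ultimately have "Tn s c \<le> Tn s (\<lambda>i. a * c i) / norm a" using False by (simp add: norm_inverse divide_inverse mult.commute)
    then have "norm a * Tn s c \<le> Tn s (\<lambda>i. a * c i)" using False by (simp add: le_divide_eq mult.commute)
    then show ?thesis using h by simp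
  qed
qed

lemma neg_Th: "c \<in> Th s \<Longrightarrow> (\<lambda>i. - c i) \<in> Th s \<and> Tn s (\<lambda>i. - c i) = Tn s c"
  using scl_Th[of c s "-1"] by simp

lemma Tn_eq0: "c \<in> Th s \<Longrightarrow> Tn s c = 0 \<Longrightarrow> c = (\<lambda>i. 0)"
  using coord by (fastforce)

end

locale setting_A1 = setting +
  assumes A1: "\<forall>s. condA1 X N g s"
begin

lemma add_Th: "c \<in> Th s \<Longrightarrow> d \<in> Th s \<Longrightarrow> (\<lambda>i. c i + d i) \<in> Th s \<and> Tn s (\<lambda>i. c i + d i) \<le> Tn s c + Tn s d"
proof -
  assume c: "c \<in> Th s" and d: "d \<in> Th s"
  have ex: "\<exists>r\<in>Ms s (\<lambda>i. c i + d i). N s r \<le> N s f + N s h" if "f \<in> Ms s c" "h \<in> Ms s d" for f h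
    using A1 c d that unfolding condA1_def by blast
  obtain f0 h0 where "f0 \<in> Ms s c" "h0 \<in> Ms s d" using c d unfolding Th_iff by blast
  then have cd: "(\<lambda>i. c i + d i) \<in> Th s" using ex unfolding Th_iff by blast
  have le: "Tn s (\<lambda>i. c i + d i) \<le> N s f + N s h" if "f \<in> Ms s c" "h \<in> Ms s d" for f h
    using ex[OF that] Tn_lower by (meson order.trans)
  have "Tn s (\<lambda>i. c i + d i) - Tn s c \<le> N s h" if h: "h \<in> Ms s d" for h
  proof -
    have "Tn s (\<lambda>i. c i + d i) - N s h \<le> Tn s c"
      by (rule Tn_greatest[OF c]) (use le[OF _ h] in force)
    then show ?thesis by simp
  qed
  then have "Tn s (\<lambda>i. c i + d i) - Tn s c \<le> Tn s d" by (rule Tn_greatest[OF d])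
  then show ?thesis using cd by simp
qed

lemma unit_Th: "unit_seq j \<in> Th s"
proof -
  obtain f where f: "f \<in> XF" "g j f = 1" using g_XF_one by blast
  have "f \<in> Ms s (unit_seq j)" unfolding Ms_iff unit_seq_def using f XF_sub by auto
  then show ?thesis unfolding Th_iff by blast
qed

lemma trunc_Th: "trunc k c \<in> Th s \<and> Tn s (trunc k c) \<le> (\<Sum>i<k. norm (c i) * Tn s (unit_seq i))"
proof (induction k)
  case 0
  have "trunc 0 c = (\<lambda>i. 0)" unfolding trunc_def by simp
  then show ?case using zero_Th Tn_zero by simp
next
  case (Suc k)
  have e: "trunc (Suc k) c = (\<lambda>i. trunc k c i + c k * unit_seq k i)"
    unfolding trunc_def unit_seq_def by (auto simp: fun_eq_iff less_Suc_eq)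
  have u: "(\<lambda>i. c k * unit_seq k i) \<in> Th s" "Tn s (\<lambda>i. c k * unit_seq k i) = norm (c k) * Tn s (unit_seq k)"
    using scl_Th[OF unit_Th] by auto
  show ?case unfolding e using add_Th[OF conjunct1[OF Suc.IH] u(1)] Suc.IH u(2) by auto
qed

lemma trunc_tail: "(c::nat\<Rightarrow>'z::ab_group_add) = (\<lambda>i. tail_seq k c i + trunc k c i)"
  unfolding trunc_def tail_seq_def by (auto simp: fun_eq_iff)

lemma sum_unit: "(\<Sum>j<n. seq_scl (a j) (unit_seq j)) = trunc n a"
proof (induction n)
  case 0 then show ?case unfolding trunc_def by (auto simp: fun_eq_iff)
next
  case (Suc n)
  then show ?case unfolding trunc_def seq_scl_def unit_seq_def by (auto simp: fun_eq_iff less_Suc_eq)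
qed

lemma diff_trunc: "(c::nat\<Rightarrow>'z::ab_group_add) - trunc n c = tail_seq n c"
  unfolding trunc_def tail_seq_def by (auto simp: fun_eq_iff)

lemma sub_Th: "c \<in> Th s \<Longrightarrow> d \<in> Th s \<Longrightarrow> (\<lambda>i. c i - d i) \<in> Th s \<and> Tn s (\<lambda>i. c i - d i) \<le> Tn s c + Tn s d"
  using add_Th[of c s "\<lambda>i. - d i"] neg_Th[of d s] by simp

lemma Th_subspace: "subspace_on seq_scl (Th s)"
  unfolding subspace_on_def
proof (intro conjI ballI allI)
  show "0 \<in> Th s" using zero_Th by (simp add: zero_fun_def)
  show "x + y \<in> Th s" if "x \<in> Th s" "y \<in> Th s" for x y
    using add_Th[OF that] by (simp add: plus_fun_def)
  show "seq_scl a x \<in> Th s" if "x \<in> Th s" for a x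
    using scl_Th[OF that] by (simp add: seq_scl_def)
qed

lemma Th_norm_on: "norm_on seq_scl (Th s) (Tn s)"
  unfolding norm_on_def
proof (intro conjI ballI allI)
  fix x assume x: "x \<in> Th s"
  show "0 \<le> Tn s x" using Tn_nonneg[OF x] .
  show "Tn s x = 0 \<longleftrightarrow> x = 0" using Tn_eq0[OF x] Tn_zero by (auto simp: zero_fun_def)
next
  fix x y assume "x \<in> Th s" "y \<in> Th s"
  then show "Tn s (x + y) \<le> Tn s x + Tn s y" using add_Th by (simp add: plus_fun_def)
next
  fix a x assume "x \<in> Th s"
  then show "Tn s (seq_scl a x) = norm a * Tn s x" using scl_Th by (simp add: seq_scl_def)
qed

lemma Th_Suc: "Th (Suc s) \<subseteq> Th s" and Tn_Suc: "c \<in> Th (Suc s) \<Longrightarrow> Tn s c \<le> Tn (Suc s) c"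
proof -
  have sub: "Ms (Suc s) c \<subseteq> Ms s c" for c using X_Suc[of s] by (auto simp: Ms_iff)
  then show "Th (Suc s) \<subseteq> Th s" by (auto simp: Th_iff) blast
  assume c: "c \<in> Th (Suc s)"
  show "Tn s c \<le> Tn (Suc s) c"
  proof (rule Tn_greatest[OF c])
    fix f assume f: "f \<in> Ms (Suc s) c"
    then have "Tn s c \<le> N s f" using sub Tn_lower by blast
    also have "\<dots> \<le> N (Suc s) f" using N_mono[of s "Suc s" f] f unfolding Ms_iff by auto
    finally show "Tn s c \<le> N (Suc s) f" .
  qed
qed

end

locale setting_A12 = setting_A1 +
  assumes A2: "\<forall>s. condA2 X N g s"
begin

lemma tail_small: "c \<in> Th s \<Longrightarrow> e > 0 \<Longrightarrow> \<exists>k\<ge>1. tail_seq k c \<in> Th s \<and> Tn s (tail_seq k c) < e"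
proof -
  assume c: "c \<in> Th s" and e: "e > 0"
  obtain k f where k: "k \<ge> 1" "f \<in> Ms s (tail_seq k c)" "N s f < e"
    using A2 c e unfolding condA2_def by blast
  then have "tail_seq k c \<in> Th s" unfolding Th_iff by blast
  moreover have "Tn s (tail_seq k c) < e" using Tn_lower[OF k(2)] k(3) by simp
  ultimately show ?thesis using k(1) by blast
qed

lemma tail_Th: "c \<in> Th s \<Longrightarrow> tail_seq n c \<in> Th s"
  using solid_Th[of c s "tail_seq n c"] unfolding tail_seq_def by auto

lemma tail_tendsto: "c \<in> Th s \<Longrightarrow> (\<lambda>n. Tn s (tail_seq n c)) \<longlonglongrightarrow> 0"
proof (rule LIMSEQ_I)
  fix e :: real assume c: "c \<in> Th s" and e: "0 < e"
  obtain k where k: "tail_seq k c \<in> Th s" "Tn s (tail_seq k c) < e" using tail_small[OF c e] by blast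
  have "norm (Tn s (tail_seq n c) - 0) < e" if "n \<ge> k" for n
  proof -
    have "Tn s (tail_seq n c) \<le> Tn s (tail_seq k c)"
      using solid_Th[OF k(1), of "tail_seq n c"] that unfolding tail_seq_def by auto
    moreover have "Tn s (tail_seq n c) \<ge> 0" using Tn_nonneg[OF tail_Th[OF c]] .
    ultimately show ?thesis using k by simp
  qed
  then show "\<exists>no. \<forall>n\<ge>no. norm (Tn s (tail_seq n c) - 0) < e" by blast
qed

lemma k_cauchy_conv:
  fixes f :: "nat \<Rightarrow> 'c::real_normed_field"
  assumes "Cauchy f" shows "convergent f"
proof -
  obtain R where R: "\<forall>x\<in>range f. norm x \<le> R" using cauchy_imp_bounded[OF assms] unfolding bounded_iff by blast
  have "\<forall>n. f n \<in> cball 0 R" using R by auto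
  moreover have "complete (cball (0::'c) R)" by (rule compact_imp_complete[OF compact_cball_k])
  ultimately show ?thesis using assms unfolding complete_def convergent_def by blast
qed

lemma coord_conv:
  assumes u: "\<And>n. (u :: nat \<Rightarrow> _) n \<in> Th s" and cau: "\<forall>e>0. \<exists>M. \<forall>m\<ge>M. \<forall>n\<ge>M. Tn s (u m - u n) < e"
  shows "\<exists>L. (\<lambda>n. u n i) \<longlonglongrightarrow> L"
proof -
  have "Cauchy (\<lambda>n. u n i)"
  proof (rule metric_CauchyI)
    fix e :: real assume e: "e > 0"
    then obtain M where M: "\<forall>m\<ge>M. \<forall>n\<ge>M. Tn s (u m - u n) < e / gC i"
      using cau gC(1)[of i] by (meson divide_pos_pos)
    have "dist (u m i) (u n i) < e" if "m \<ge> M" "n \<ge> M" for m n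
    proof -
      have mn: "(u m - u n) \<in> Th s" using sub_Th[OF u u, of m n] by (simp add: fun_diff_def)
      have "norm ((u m - u n) i) \<le> gC i * Tn s (u m - u n)" using coord[OF mn] .
      also have "\<dots> < gC i * (e / gC i)" using M that gC(1)[of i] by (intro mult_strict_left_mono) auto
      finally show ?thesis using gC(1)[of i] by (simp add: dist_norm)
    qed
    then show "\<exists>M. \<forall>m\<ge>M. \<forall>n\<ge>M. dist (u m i) (u n i) < e" by blast
  qed
  then show ?thesis using k_cauchy_conv convergent_def by blast
qed

lemma subseq_half:
  assumes cau: "\<forall>e>0. \<exists>M. \<forall>m\<ge>M. \<forall>n\<ge>M. Tn s ((u :: nat \<Rightarrow> _) m - u n) < e"
  shows "\<exists>\<sigma>. strict_mono \<sigma> \<and> (\<forall>k. \<forall>m\<ge>\<sigma> k. \<forall>n\<ge>\<sigma> k. Tn s (u m - u n) < (1/2)^k)"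
proof -
  have "\<forall>k. \<exists>M. \<forall>m\<ge>M. \<forall>n\<ge>M. Tn s (u m - u n) < (1/2)^k" using cau by simp
  then obtain Mf where Mf: "\<forall>k. \<forall>m\<ge>Mf k. \<forall>n\<ge>Mf k. Tn s (u m - u n) < (1/2)^k" by metis
  define \<sigma> where "\<sigma> k = (\<Sum>j\<le>k. Mf j) + k" for k
  have ge: "\<sigma> k \<ge> Mf k" for k unfolding \<sigma>_def using member_le_sum[of k "{..k}" Mf] by simp
  have "strict_mono \<sigma>" unfolding strict_mono_Suc_iff \<sigma>_def by simp
  moreover have "\<forall>k. \<forall>m\<ge>\<sigma> k. \<forall>n\<ge>\<sigma> k. Tn s (u m - u n) < (1/2)^k"
    using Mf ge by (meson order.trans)
  ultimately show ?thesis by blast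
qed

lemma geom_le2: "(\<Sum>k<n. (1/2::real)^k) \<le> 2"
proof -
  have "(\<Sum>k<n. (1/2::real)^k) \<le> (\<Sum>k. (1/2::real)^k)"
    by (rule sum_le_suminf) (auto intro: summable_geometric)
  also have "\<dots> = 2" using suminf_geometric[of "1/2::real"] by simp
  finally show ?thesis .
qed

lemma dominate:
  assumes d: "\<And>k. d k \<in> Th s" and dk: "\<And>k. Tn s (d k) < (1/2)^k"
  shows "(\<forall>i. summable (\<lambda>k. norm (d k i))) \<and> (\<lambda>i. of_real (\<Sum>k. norm (d k i)) :: 'a) \<in> Th s"
proof -
  have "\<forall>k. \<exists>f\<in>Ms s (d k). N s f < (1/2)^k" using Tn_less[OF d dk] by blast
  then obtain f where f: "\<And>k. f k \<in> Ms s (d k)" "\<And>k. N s (f k) < (1/2)^k" by metis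
  have summ: "summable (\<lambda>k. norm (d k i))" for i
  proof (rule summable_comparison_test)
    show "\<exists>N. \<forall>n\<ge>N. norm (norm (d n i)) \<le> gC i * (1/2)^n"
    proof (intro exI allI impI)
      fix n
      have "norm (d n i) \<le> gC i * Tn s (d n)" using coord[OF d] .
      also have "\<dots> \<le> gC i * (1/2)^n" using dk[of n] gC(1)[of i] by (intro mult_left_mono) auto
      finally show "norm (norm (d n i)) \<le> gC i * (1/2)^n" by simp
    qed
    show "summable (\<lambda>n. gC i * (1/2::real)^n)" by (intro summable_mult summable_geometric) simp
  qed
  define p where "p n i = (\<Sum>k<n. norm (d k i))" for n i
  have p0: "p n i \<ge> 0" for n i unfolding p_def by (simp add: sum_nonneg)
  have R: "\<exists>r. r \<in> X s \<and> (\<forall>i. p n i \<le> norm (g i r)) \<and> N s r \<le> (\<Sum>k<n. (1/2)^k)" for n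
  proof (induction n)
    case 0
    show ?case using X0 N_0 by (intro exI[of _ 0]) (simp add: p_def)
  next
    case (Suc n)
    then obtain r where r: "r \<in> X s" "\<forall>i. p n i \<le> norm (g i r)" "N s r \<le> (\<Sum>k<n. (1/2)^k)" by blast
    define c where "c = (\<lambda>i. of_real (p n i) :: 'a)"
    define e where "e = (\<lambda>i. of_real (norm (d n i)) :: 'a)"
    have rc: "r \<in> Ms s c" unfolding Ms_iff c_def using r p0 by simp
    have fe: "f n \<in> Ms s e" unfolding Ms_iff e_def using f(1)[of n] by (simp add: Ms_iff)
    have "c \<in> Th s" "e \<in> Th s" using rc fe unfolding Th_iff by blast+
    then obtain r' where r': "r' \<in> Ms s (\<lambda>i. c i + e i)" "N s r' \<le> N s r + N s (f n)"
      using A1 rc fe unfolding condA1_def by blast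
    have ce: "(\<lambda>i. c i + e i) = (\<lambda>i. of_real (p (Suc n) i))" unfolding c_def e_def p_def by simp
    have "r' \<in> X s" "\<forall>i. p (Suc n) i \<le> norm (g i r')" using r'(1) p0 unfolding ce Ms_iff by auto
    moreover have "N s r' \<le> (\<Sum>k<Suc n. (1/2)^k)" using r'(2) r(3) f(2)[of n] by simp
    ultimately show ?case by blast
  qed
  then obtain rr where rr: "\<And>n. rr n \<in> X s" "\<And>n i. p n i \<le> norm (g i (rr n))" "\<And>n. N s (rr n) \<le> 2"
    using geom_le2 by (metis order.trans)
  obtain F :: "nat filter" where F: "F \<noteq> bot" "F \<le> sequentially" "\<forall>P. eventually P F \<or> eventually (\<lambda>n. \<not> P n) F"
    using ultra_exists by blast
  obtain x0 where x0: "x0 \<in> X s" "\<forall>\<phi>\<in>dual_set scl (X s) (N s). ((\<lambda>n. \<phi> (rr n)) \<longlongrightarrow> \<phi> x0) F"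
    using weak_limit[where r=rr, OF vs ban X_refl[rule_format, of s] rr(1) rr(3) F(1) F(3)] by blast
  have bnd: "(\<Sum>k. norm (d k i)) \<le> norm (g i x0)" for i
  proof -
    define \<phi> where "\<phi> = (\<lambda>x. if x \<in> X s then g i x else 0)"
    have X0s: "X s \<subseteq> X 0" using X_mono[of 0 s] by simp
    have "\<phi> \<in> dual_set scl (X s) (N s)" unfolding dual_set_def lin_fun_def bounded_fun_def
    proof (intro CollectI conjI ballI allI impI exI)
      fix x y assume "x \<in> X s" "y \<in> X s"
      then show "\<phi> (x + y) = \<phi> x + \<phi> y" unfolding \<phi>_def using Xadd[of x s y] g_lin[of x y i] X0s by auto
    next
      fix a x assume "x \<in> X s"
      then show "\<phi> (scl a x) = a * \<phi> x" unfolding \<phi>_def using Xscl g_hom X0s by auto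
    next
      fix x assume "x \<in> X s"
      then show "norm (\<phi> x) \<le> gC i * N s x" unfolding \<phi>_def using gC(2) by auto
    next
      fix x assume "x \<notin> X s"
      then show "\<phi> x = 0" unfolding \<phi>_def by simp
    qed
    then have "((\<lambda>n. \<phi> (rr n)) \<longlongrightarrow> \<phi> x0) F" using x0 by blast
    then have "((\<lambda>n. g i (rr n)) \<longlongrightarrow> g i x0) F" unfolding \<phi>_def using rr(1) x0(1) by simp
    then have lim: "((\<lambda>n. norm (g i (rr n))) \<longlongrightarrow> norm (g i x0)) F" by (rule tendsto_norm)
    have "p m i \<le> norm (g i x0)" for m
    proof (rule tendsto_lowerbound[OF lim _ ])
      have "eventually (\<lambda>n. n \<ge> m) sequentially" by (simp add: eventually_ge_at_top)
      then have "eventually (\<lambda>n. n \<ge> m) F" using filter_leD[OF F(2)] by blast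
      then show "eventually (\<lambda>n. p m i \<le> norm (g i (rr n))) F"
      proof (rule eventually_mono)
        fix n assume "m \<le> n"
        then have "p m i \<le> p n i" unfolding p_def by (intro sum_mono2) auto
        then show "p m i \<le> norm (g i (rr n))" using rr(2)[of n i] by simp
      qed
      show "F \<noteq> bot" using F(1) .
    qed
    then show ?thesis using summ unfolding p_def by (intro suminf_le_const) auto
  qed
  have "x0 \<in> Ms s (\<lambda>i. of_real (\<Sum>k. norm (d k i)))"
    unfolding Ms_iff using x0(1) bnd summ by (simp add: suminf_nonneg)
  then show ?thesis using summ unfolding Th_iff by blast
qed

lemma complete_Th: "complete_on (Th s) (Tn s)"
  unfolding complete_on_def
proof (intro allI impI, elim conjE)
  fix u :: "nat \<Rightarrow> nat \<Rightarrow> _"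
  assume u: "\<forall>n. u n \<in> Th s" and cau: "\<forall>e>0. \<exists>M. \<forall>m\<ge>M. \<forall>n\<ge>M. Tn s (u m - u n) < e"
  have uTh: "\<And>n. u n \<in> Th s" using u by blast
  have dTh: "(\<lambda>i. u m i - u n i) \<in> Th s" for m n using sub_Th[OF uTh uTh] by blast
  have fd: "u m - u n = (\<lambda>i. u m i - u n i)" for m n by (simp add: fun_diff_def)
  obtain \<sigma> where \<sigma>: "strict_mono \<sigma>" "\<forall>k. \<forall>m\<ge>\<sigma> k. \<forall>n\<ge>\<sigma> k. Tn s (u m - u n) < (1/2)^k"
    using subseq_half[OF cau] by blast
  define d where "d k = (\<lambda>i. u (\<sigma> (Suc k)) i - u (\<sigma> k) i)" for k
  have d: "d k \<in> Th s" for k unfolding d_def by (rule dTh)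
  have dk: "Tn s (d k) < (1/2)^k" for k
  proof -
    have "\<sigma> (Suc k) \<ge> \<sigma> k" using \<sigma>(1) by (simp add: strict_mono_less_eq)
    then show ?thesis using \<sigma>(2) unfolding d_def fd[symmetric] by auto
  qed
  have summ: "\<And>i. summable (\<lambda>k. norm (d k i))"
    and bbTh: "(\<lambda>i. of_real (\<Sum>k. norm (d k i))) \<in> Th s"
    using dominate[OF d dk] by auto
  define b where "b i = (\<Sum>k. norm (d k i))" for i
  define p where "p n i = (\<Sum>k<n. norm (d k i))" for n i
  define bb where "bb = (\<lambda>i. of_real (b i) :: 'a)"
  have bbTh': "bb \<in> Th s" using bbTh unfolding bb_def b_def .
  have b0: "b i \<ge> 0" for i unfolding b_def using summ by (simp add: suminf_nonneg)
  have nbb: "norm (bb i) = b i" for i unfolding bb_def using b0 by simp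
  have pb: "p n i \<le> b i" for n i unfolding p_def b_def using summ by (intro sum_le_suminf) auto
  have plim: "(\<lambda>n. p n i) \<longlonglongrightarrow> b i" for i unfolding p_def b_def
    using summable_LIMSEQ[OF summ] .
  obtain x where x: "\<And>i. (\<lambda>n. u n i) \<longlonglongrightarrow> x i"
    using coord_conv[OF uTh cau] by metis
  have xs: "(\<lambda>K. u (\<sigma> K) i) \<longlonglongrightarrow> x i" for i
    using LIMSEQ_subseq_LIMSEQ[OF x \<sigma>(1)] by (simp add: comp_def)
  have tele: "u (\<sigma> n) i - u (\<sigma> K) i = (\<Sum>k\<in>{K..<n}. d k i)" if "K \<le> n" for K n i
    using that
  proof (induction n rule: dec_induct)
    case base then show ?case by simp
  next
    case (step n)
    have "(\<Sum>k\<in>{K..<Suc n}. d k i) = (\<Sum>k\<in>{K..<n}. d k i) + d n i" using step.hyps(1) by simp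
    also have "\<dots> = (u (\<sigma> n) i - u (\<sigma> K) i) + d n i" using step.IH by simp
    also have "\<dots> = u (\<sigma> (Suc n)) i - u (\<sigma> K) i" unfolding d_def by simp
    finally show ?case by simp
  qed
  have wb: "norm (x i - u (\<sigma> K) i) \<le> b i - p K i" for i K
  proof -
    have "norm (u (\<sigma> n) i - u (\<sigma> K) i) \<le> b i - p K i" if "n \<ge> K" for n
    proof -
      have "norm (u (\<sigma> n) i - u (\<sigma> K) i) \<le> (\<Sum>k\<in>{K..<n}. norm (d k i))"
        unfolding tele[OF that] by (rule norm_sum)
      also have "\<dots> = p n i - p K i" unfolding p_def
        using sum.atLeastLessThan_concat[of 0 K n "\<lambda>k. norm (d k i)"] that by (simp add: lessThan_atLeast0)
      also have "\<dots> \<le> b i - p K i" using pb by simp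
      finally show ?thesis .
    qed
    then have ev: "eventually (\<lambda>n. norm (u (\<sigma> n) i - u (\<sigma> K) i) \<le> b i - p K i) sequentially"
      by (auto simp: eventually_sequentially)
    have "(\<lambda>n. norm (u (\<sigma> n) i - u (\<sigma> K) i)) \<longlonglongrightarrow> norm (x i - u (\<sigma> K) i)"
      by (intro tendsto_intros xs)
    then show ?thesis using ev by (rule tendsto_upperbound) simp
  qed
  define w where "w K = (\<lambda>i. u (\<sigma> K) i - x i)" for K
  have nw: "norm (w K i) \<le> b i" for K i
  proof -
    have "p K i \<ge> 0" unfolding p_def by (simp add: sum_nonneg)
    then show ?thesis using wb[of i K] unfolding w_def by (simp add: norm_minus_commute)
  qed
  have wTh: "w K \<in> Th s" for K using solid_Th[OF bbTh', of "w K"] nw nbb by simp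
  have xTh: "x \<in> Th s"
  proof -
    have "x = (\<lambda>i. u (\<sigma> 0) i - w 0 i)" unfolding w_def by simp
    then show ?thesis using sub_Th[OF uTh wTh] by metis
  qed
  have w0: "(\<lambda>K. w K i) \<longlonglongrightarrow> 0" for i
    unfolding w_def using tendsto_diff[OF xs[of i] tendsto_const[of "x i"]] by simp
  have wlim: "(\<lambda>K. Tn s (w K)) \<longlonglongrightarrow> 0"
  proof (rule LIMSEQ_I)
    fix e :: real assume e: "e > 0"
    obtain K' where K': "tail_seq K' bb \<in> Th s" "Tn s (tail_seq K' bb) < e/2"
      using tail_small[OF bbTh', of "e/2"] e by auto
    have "(\<lambda>K. \<Sum>i<K'. norm (w K i) * Tn s (unit_seq i)) \<longlonglongrightarrow> (\<Sum>i<K'. 0 * Tn s (unit_seq i))"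
      by (intro tendsto_sum tendsto_mult tendsto_const tendsto_norm_zero w0)
    then have "(\<lambda>K. \<Sum>i<K'. norm (w K i) * Tn s (unit_seq i)) \<longlonglongrightarrow> 0" by simp
    from LIMSEQ_D[OF this, of "e/2"] e obtain K0 where K0: "\<forall>K\<ge>K0. norm ((\<Sum>i<K'. norm (w K i) * Tn s (unit_seq i)) - 0) < e/2"
      by auto
    have "norm (Tn s (w K) - 0) < e" if "K \<ge> K0" for K
    proof -
      have tt: "tail_seq K' (w K) \<in> Th s \<and> Tn s (tail_seq K' (w K)) \<le> Tn s (tail_seq K' bb)"
        using solid_Th[OF K'(1), of "tail_seq K' (w K)"] nw nbb unfolding tail_seq_def by auto
      have tr: "trunc K' (w K) \<in> Th s \<and> Tn s (trunc K' (w K)) \<le> (\<Sum>i<K'. norm (w K i) * Tn s (unit_seq i))"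
        using trunc_Th by blast
      have "Tn s (w K) \<le> Tn s (tail_seq K' (w K)) + Tn s (trunc K' (w K))"
        using add_Th[of "tail_seq K' (w K)" s "trunc K' (w K)"] tt tr trunc_tail[of "w K" K'] by metis
      also have "\<dots> < e/2 + e/2"
      proof -
        have "(\<Sum>i<K'. norm (w K i) * Tn s (unit_seq i)) < e/2" using K0 that by auto
        then show ?thesis using tt K'(2) tr by linarith
      qed
      finally have "Tn s (w K) < e" by simp
      then show ?thesis using Tn_nonneg[OF wTh] by simp
    qed
    then show "\<exists>no. \<forall>n\<ge>no. norm (Tn s (w n) - 0) < e" by blast
  qed
  have "(\<lambda>n. Tn s (u n - x)) \<longlonglongrightarrow> 0"
  proof (rule LIMSEQ_I)
    fix e :: real assume e: "e > 0"
    obtain k where k: "(1/2::real)^k < e/2"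
      using real_arch_pow_inv[of "e/2" "1/2::real"] e by auto
    obtain K0 where K0: "\<forall>K\<ge>K0. norm (Tn s (w K) - 0) < e/2" using LIMSEQ_D[OF wlim, of "e/2"] e by auto
    define K where "K = max k K0"
    have sK: "\<sigma> K \<ge> \<sigma> k" using \<sigma>(1) unfolding K_def by (simp add: strict_mono_less_eq)
    have "norm (Tn s (u n - x) - 0) < e" if n: "n \<ge> \<sigma> k" for n
    proof -
      have e1: "u n - x = (\<lambda>i. (u n i - u (\<sigma> K) i) + w K i)" unfolding w_def by (auto simp: fun_eq_iff)
      have le: "Tn s (u n - x) \<le> Tn s (\<lambda>i. u n i - u (\<sigma> K) i) + Tn s (w K)"
        unfolding e1 using add_Th[OF dTh wTh] by blast
      have l1: "Tn s (\<lambda>i. u n i - u (\<sigma> K) i) < (1/2)^k" using \<sigma>(2) n sK unfolding fd by auto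
      have l2: "Tn s (w K) < e/2" using K0 Tn_nonneg[OF wTh] unfolding K_def by fastforce
      have "Tn s (u n - x) < e" using le l1 l2 k by linarith
      moreover have "u n - x \<in> Th s"
      proof -
        have "u n - x = (\<lambda>i. u n i - x i)" by (simp add: fun_diff_def)
        then show ?thesis using sub_Th[OF uTh xTh, of n] by simp
      qed
      ultimately show ?thesis using Tn_nonneg[of "u n - x" s] by simp
    qed
    then show "\<exists>no. \<forall>n\<ge>no. norm (Tn s (u n - x) - 0) < e" by blast
  qed
  then show "\<exists>x\<in>Th s. (\<lambda>n. Tn s (u n - x)) \<longlonglongrightarrow> 0" using xTh by blast
qed

lemma Th_banach: "banach_on seq_scl (Th s) (Tn s)"
  unfolding banach_on_def using Th_subspace Th_norm_on complete_Th by blast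

lemma k_dense: "\<exists>Q::'a set. countable Q \<and> (\<forall>a. \<forall>e>0. \<exists>q\<in>Q. norm (a - q) < e)"
proof -
  obtain D where D: "countable D" "dense_on D (X 0) (N 0)"
    using X_props unfolding props_iii_def separable_on_def by blast
  obtain x1 where x1: "x1 \<in> XF" "g 0 x1 = 1" using g_XF_one by blast
  have x10: "x1 \<in> X 0" using x1 XF_sub by blast
  have "\<exists>q\<in>g 0 ` D. norm (a - q) < e" if e: "e > 0" for a e
  proof -
    define y where "y = scl a x1"
    have y: "y \<in> X 0" "g 0 y = a" unfolding y_def using Xscl[OF x10] g_hom[OF x10] x1 by auto
    obtain d where d: "d \<in> D" "N 0 (y - d) < e / gC 0"
      using D(2) y e gC(1)[of 0] unfolding dense_on_def by (meson divide_pos_pos)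
    have d0: "d \<in> X 0" using D(2) d unfolding dense_on_def by blast
    have "norm (a - g 0 d) = norm (g 0 (y - d))" using g_diff[OF y(1) d0] y by simp
    also have "\<dots> \<le> gC 0 * N 0 (y - d)" using gC(2)[OF Xdiff[OF y(1) d0]] .
    also have "\<dots> < gC 0 * (e / gC 0)" using d gC(1)[of 0] by (intro mult_strict_left_mono) auto
    finally show ?thesis using gC(1)[of 0] d by auto
  qed
  then show ?thesis using D(1) by blast
qed

lemma Th_separable: "separable_on (Th s) (Tn s)"
proof -
  obtain Q :: "'a set" where Q0: "countable Q" "\<forall>a. \<forall>e>0. \<exists>q\<in>Q. norm (a - q) < e" using k_dense by (elim exE conjE)
  have Q: "countable Q" "\<And>a e. e > 0 \<Longrightarrow> \<exists>q\<in>Q. norm (a - q) < e" using Q0 by auto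
  define D where "D = (\<lambda>l. trunc (length l) (\<lambda>i. l ! i)) ` lists Q"
  have cD: "countable D" unfolding D_def using Q(1) by simp
  have DT: "D \<subseteq> Th s" unfolding D_def using trunc_Th by blast
  have "\<exists>y\<in>D. Tn s (c - y) < e" if c: "c \<in> Th s" and e: "e > 0" for c e
  proof -
    obtain k where k: "tail_seq k c \<in> Th s" "Tn s (tail_seq k c) < e/2" using tail_small[OF c, of "e/2"] e by auto
    define S where "S = (\<Sum>i<k. Tn s (unit_seq i))"
    have S0: "S \<ge> 0" unfolding S_def using Tn_nonneg[OF unit_Th] by (simp add: sum_nonneg)
    define \<delta> where "\<delta> = e / (2 * (1 + S))"
    have \<delta>: "\<delta> > 0" unfolding \<delta>_def using e S0 by simp
    have "\<forall>i. \<exists>q. q \<in> Q \<and> norm (c i - q) < \<delta>" using Q(2)[OF \<delta>] by blast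
    from choice[OF this] obtain q where q0: "\<forall>i. q i \<in> Q \<and> norm (c i - q i) < \<delta>" by blast
    then have q: "\<And>i. q i \<in> Q" "\<And>i. norm (c i - q i) < \<delta>" by auto
    define l where "l = map q [0..<k]"
    have lQ: "l \<in> lists Q" unfolding l_def using q(1) by auto
    have yl: "trunc (length l) (\<lambda>i. l ! i) = trunc k q" unfolding l_def trunc_def by (auto simp: fun_eq_iff)
    have yD: "trunc k q \<in> D" unfolding D_def using lQ yl[symmetric] by (rule rev_image_eqI)
    have split: "c - trunc k q = (\<lambda>i. tail_seq k c i + trunc k (\<lambda>i. c i - q i) i)"
      unfolding trunc_def tail_seq_def by (auto simp: fun_eq_iff)
    have tr: "trunc k (\<lambda>i. c i - q i) \<in> Th s \<and> Tn s (trunc k (\<lambda>i. c i - q i)) \<le> (\<Sum>i<k. norm (c i - q i) * Tn s (unit_seq i))"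
      using trunc_Th by blast
    have "(\<Sum>i<k. norm (c i - q i) * Tn s (unit_seq i)) \<le> (\<Sum>i<k. \<delta> * Tn s (unit_seq i))"
      using q(2) Tn_nonneg[OF unit_Th] by (intro sum_mono mult_right_mono) (auto intro: less_imp_le)
    also have "\<dots> = \<delta> * S" unfolding S_def by (simp add: sum_distrib_left)
    also have "\<dots> < e/2"
    proof -
      have nz: "1 + S \<noteq> 0" using S0 by simp
      have nz2: "2 + 2 * S \<noteq> 0" using S0 by simp
      have "\<delta> * (1 + S) = e/2" unfolding \<delta>_def using nz nz2 by (simp add: field_simps)
      moreover have "\<delta> * S < \<delta> * (1 + S)" using \<delta> by simp
      ultimately show ?thesis by linarith
    qed
    finally have t2: "Tn s (trunc k (\<lambda>i. c i - q i)) < e/2" using tr by linarith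
    have "Tn s (c - trunc k q) \<le> Tn s (tail_seq k c) + Tn s (trunc k (\<lambda>i. c i - q i))"
      unfolding split using add_Th[OF k(1) conjunct1[OF tr]] by blast
    then have "Tn s (c - trunc k q) < e" using k(2) t2 by linarith
    then show ?thesis using yD by blast
  qed
  then have "\<forall>c\<in>Th s. \<forall>e>0. \<exists>y\<in>D. Tn s (c - y) < e" by blast
  then have "dense_on D (Th s) (Tn s)" unfolding dense_on_def using DT by (intro conjI)
  then show ?thesis unfolding separable_on_def using cD by (intro exI[of _ D] conjI)
qed

lemma ThF_dense: "dense_on (\<Inter>s. Th s) (Th s) (Tn s)"
  unfolding dense_on_def
proof (intro conjI ballI allI impI)
  show "(\<Inter>s. Th s) \<subseteq> Th s" by blast
  fix c e assume c: "c \<in> Th s" and e: "(e::real) > 0"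
  obtain k where k: "tail_seq k c \<in> Th s" "Tn s (tail_seq k c) < e" using tail_small[OF c e] by auto
  have "trunc k c \<in> (\<Inter>s. Th s)" using trunc_Th by blast
  moreover have "Tn s (c - trunc k c) < e" using k by (simp only: diff_trunc)
  ultimately show "\<exists>y\<in>\<Inter>s. Th s. Tn s (c - y) < e" by blast
qed

lemma Th_CB: "CB_space (Th s) (Tn s)"
  unfolding CB_space_def BK_space_def
proof (intro conjI allI ballI)
  show "banach_on seq_scl (Th s) (Tn s)" by (rule Th_banach)
  show "\<exists>C. \<forall>c\<in>Th s. norm (c i) \<le> C * Tn s c" for i using coord by blast
  show "unit_seq j \<in> Th s" for j by (rule unit_Th)
  fix c assume c: "c \<in> Th s"
  show "\<exists>!a. (\<lambda>n. Tn s (c - (\<Sum>j<n. seq_scl (a j) (unit_seq j)))) \<longlonglongrightarrow> 0"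
  proof (rule ex1I)
    show "(\<lambda>n. Tn s (c - (\<Sum>j<n. seq_scl (c j) (unit_seq j)))) \<longlonglongrightarrow> 0"
      unfolding sum_unit diff_trunc using tail_tendsto[OF c] .
  next
    fix a assume a: "(\<lambda>n. Tn s (c - (\<Sum>j<n. seq_scl (a j) (unit_seq j)))) \<longlonglongrightarrow> 0"
    show "a = c"
    proof
      fix i
      have a': "(\<lambda>n. gC i * Tn s (c - trunc n a)) \<longlonglongrightarrow> gC i * 0"
        using a unfolding sum_unit by (intro tendsto_mult tendsto_const)
      have ev: "eventually (\<lambda>n. norm (c i - a i) \<le> gC i * Tn s (c - trunc n a)) sequentially"
      proof -
        have "norm (c i - a i) \<le> gC i * Tn s (c - trunc n a)" if "n > i" for n
        proof -
          have m: "c - trunc n a = (\<lambda>j. c j - trunc n a j)" by (simp add: fun_diff_def)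
          have "c - trunc n a \<in> Th s" unfolding m using sub_Th[OF c conjunct1[OF trunc_Th]] by blast
          from coord[OF this, of i] show ?thesis using that by (simp add: trunc_def)
        qed
        then show ?thesis unfolding eventually_sequentially by (intro exI[of _ "Suc i"]) auto
      qed
      have "norm (c i - a i) \<le> gC i * 0" using tendsto_lowerbound[OF a' ev trivial_limit_sequentially] .
      then show "a i = c i" by simp
    qed
  qed
qed

lemma Th_props: "props_iii seq_scl Th Tn"
  unfolding props_iii_def
proof (intro conjI allI ballI)
  show "banach_on seq_scl (Th s) (Tn s)" for s by (rule Th_banach)
  show "separable_on (Th s) (Tn s)" for s by (rule Th_separable)
  show "(\<Inter>s. Th s) \<noteq> {0}"
  proof
    assume h: "(\<Inter>s. Th s) = {0}"
    have "unit_seq 0 \<in> (\<Inter>s. Th s)" using unit_Th by blast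
    then have "unit_seq 0 = (0 :: nat \<Rightarrow> 'a)" using h by blast
    then have "unit_seq 0 (0::nat) = (0::'a)" by simp
    then show False unfolding unit_seq_def by simp
  qed
  show "Th (Suc s) \<subseteq> Th s" for s by (rule Th_Suc)
  show "Tn s y \<le> Tn (Suc s) y" if "y \<in> Th (Suc s)" for s y using Tn_Suc[OF that] .
  show "dense_on (\<Inter>s. Th s) (Th s) (Tn s)" for s by (rule ThF_dense)
qed

end

context setting
begin

lemma Bessel: "F_Bessel scl X N g Th Tn"
  unfolding F_Bessel_def
proof (intro conjI allI ballI)
  fix i
  have sub0: "(\<Inter>s. X s) \<subseteq> X 0" by blast
  show "lin_fun scl (\<Inter>s. X s) (g i)" unfolding lin_fun_def
  proof (intro conjI ballI allI)
    fix x y assume "x \<in> (\<Inter>s. X s)" "y \<in> (\<Inter>s. X s)"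
    then show "g i (x + y) = g i x + g i y" using g_lin[of x y i] sub0 by blast
  next
    fix a x assume "x \<in> (\<Inter>s. X s)"
    then show "g i (scl a x) = a * g i x" using g_hom[of x i a] sub0 by blast
  qed
  show "\<exists>s C. \<forall>f\<in>\<Inter>s. X s. norm (g i f) \<le> C * N s f" using gC(2) by blast
next
  fix f assume f: "f \<in> (\<Inter>s. X s)"
  have "f \<in> Ms s (\<lambda>i. g i f)" for s unfolding Ms_iff using f by auto
  then have "(\<lambda>i. g i f) \<in> Th s" for s unfolding Th_iff by blast
  then show "(\<lambda>i. g i f) \<in> (\<Inter>s. Th s)" by blast
next
  fix s
  have "Tn s (\<lambda>i. g i f) \<le> 1 * N s f" if "f \<in> (\<Inter>s. X s)" for f
  proof -
    have "f \<in> Ms s (\<lambda>i. g i f)" unfolding Ms_iff using that by auto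
    then show ?thesis using Tn_lower by simp
  qed
  then show "\<exists>B. \<forall>f\<in>\<Inter>s. X s. Tn s (\<lambda>i. g i f) \<le> B * N s f" by blast
qed

lemma frame: "\<forall>s. condA3 X N g s \<Longrightarrow> pre_F_frame scl X N g Th Tn"
  unfolding pre_F_frame_def
proof (intro conjI allI Bessel)
  fix s assume A3: "\<forall>s. condA3 X N g s"
  obtain A where A: "0 < A" "\<forall>f\<in>X s. \<forall>ft\<in>Ms s (\<lambda>i. g i f). A * N s f \<le> N s ft"
    using A3 unfolding condA3_def by blast
  have "A * N s f \<le> Tn s (\<lambda>i. g i f)" if f: "f \<in> (\<Inter>s. X s)" for f
  proof (rule Tn_greatest)
    have "f \<in> Ms s (\<lambda>i. g i f)" unfolding Ms_iff using f by auto
    then show "(\<lambda>i. g i f) \<in> Th s" unfolding Th_iff by blast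
    show "A * N s f \<le> N s ft" if "ft \<in> Ms s (\<lambda>i. g i f)" for ft using A(2) f that by blast
  qed
  then show "\<exists>A>0. \<forall>f\<in>\<Inter>s. X s. A * N s f \<le> Tn s (\<lambda>i. g i f)" using A(1) by blast
qed

end

theorem corollary5p2:
  fixes scl :: "'k::real_normed_field \<Rightarrow> 'a::ab_group_add \<Rightarrow> 'a"
    and X :: "nat \<Rightarrow> 'a set" and N :: "nat \<Rightarrow> 'a \<Rightarrow> real"
    and g :: "nat \<Rightarrow> 'a \<Rightarrow> 'k"
  assumes vs: "vector_space scl"
    and X_props: "props_iii scl X N"
    and X_refl: "\<forall>s. reflexive_on scl (X s) (N s)"
    and g_dual: "\<forall>i. g i \<in> dual_set scl (X 0) (N 0)"
    and g_nonzero: "\<forall>i. \<exists>x\<in>X 0. g i x \<noteq> 0"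
  shows "((\<forall>s. condA1 X N g s \<and> condA2 X N g s) \<longrightarrow>
            (\<forall>s. solid (Theta X g s) (Theta_norm X N g s) \<and> CB_space (Theta X g s) (Theta_norm X N g s)) \<and>
            props_iii seq_scl (Theta X g) (Theta_norm X N g) \<and>
            F_Bessel scl X N g (Theta X g) (Theta_norm X N g))
       \<and> ((\<forall>s. condA1 X N g s \<and> condA2 X N g s \<and> condA3 X N g s) \<longrightarrow>
            pre_F_frame scl X N g (Theta X g) (Theta_norm X N g))"
proof -
  interpret S: setting scl X N g
    by (rule setting.intro) (use assms in auto)
  show ?thesis
  proof (intro conjI impI)
    assume h: "\<forall>s. condA1 X N g s \<and> condA2 X N g s"
    interpret T: setting_A12 scl X N g
      by (intro setting_A12.intro setting_A1.intro setting_A12_axioms.intro setting_A1_axioms.intro S.setting_axioms) (use h in auto)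
    show "\<forall>s. solid (Theta X g s) (Theta_norm X N g s) \<and> CB_space (Theta X g s) (Theta_norm X N g s)"
      unfolding solid_def using S.solid_Th T.Th_CB by blast
    show "props_iii seq_scl (Theta X g) (Theta_norm X N g)" using T.Th_props .
    show "F_Bessel scl X N g (Theta X g) (Theta_norm X N g)" using S.Bessel .
  next
    assume h: "\<forall>s. condA1 X N g s \<and> condA2 X N g s \<and> condA3 X N g s"
    show "pre_F_frame scl X N g (Theta X g) (Theta_norm X N g)" using S.frame h by blast
  qed
qed

end
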